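(* The monoid $\mathcal{BR}(\mathfrak{S}_n)$ is presented by generators $e_1,\ldots,e_{n-1}$ and $z_1,\ldots,z_{n-1}$ subject to the relations: $e_i^2=e_i$ and $e_ie_j=e_je_i$ for all $i,j$; $z_iz_jz_i=z_jz_iz_j$ for $|i-j|=1$; $z_iz_j=z_jz_i$ for $|i-j|>1$; $e_iz_j=z_je_i$ for all $i,j$; $z_i^2=e_i$; $e_iz_i=z_i$.
   Context: $\mathfrak{C}_n$ is the partition monoid: set partitions of $[2n]$ (top points $1,\dots,n$, bottom points $n+1,\dots,2n$) with concatenation product $I*J$ (identify bottom point $n+i$ of $I$ with top point $i$ of $J$, join blocks transitively, delete the middle points). $I\preceq J$ means each block of $J$ is a union of blocks of $I$. $\mathfrak{S}_n\subseteq\mathfrak{C}_n$ consists of the partitions with all blocks of the form $\{i,n+j\}$; $s_i$ is the simple transposition; $1=\{\{i,n+i\}\}$. A set partition $J$ of $[2n]$ is boxed if $1\preceq J$ and the restriction of $J$ to $[n]$ is linear (all blocks intervals). $\mathcal{BR}(\mathfrak{S}_n)$ is the set of pairs $(I,J)$ with $I\in\mathfrak{S}_n$, $J$ boxed, $I\preceq J$, with product $(I,J)(H,K)=(I*H,J*K)$. Let $b_i$ be obtained from $1$ by merging the blocks $\{i,n+i\}$ and $\{i+1,n+i+1\}$; $e_i=(1,b_i)$ and $z_i=(s_i,b_i)$. *)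

theory Defs
  imports "HOL-Library.Disjoint_Sets"
begin

text \<open>A set partition of [2n] is a set of nonempty pairwise disjoint blocks covering {1..2n}.
Top points are 1..n, bottom points are n+1..2n.\<close>

definition pmon :: "nat \<Rightarrow> nat set set set" where
  "pmon n = {P. partition_on {1..2*n} P}"

definition rel_of :: "nat set set \<Rightarrow> (nat \<times> nat) set" where
  "rel_of P = (\<Union>B\<in>P. B \<times> B)"

text \<open>Concatenation product: the blocks of J are shifted by n, so top point i of J
becomes n+i (identified with the bottom point n+i of I) and bottom point n+i of J
becomes 2n+i.\<close>

definition pmult :: "nat \<Rightarrow> nat set set \<Rightarrow> nat set set \<Rightarrow> nat set set" where
  "pmult n I J =
     (let J' = (\<lambda>B. (\<lambda>x. x + n) ` B) ` J;
          R = (rel_of I \<union> rel_of J')\<^sup>+;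
          mid = {n+1..2*n};
          f = (\<lambda>x. if x > 2*n then x - n else x)
      in {f ` (C - mid) | C. C \<in> {1..3*n} // R \<and> C - mid \<noteq> {}})"

definition refines :: "nat set set \<Rightarrow> nat set set \<Rightarrow> bool" where
  "refines I J \<longleftrightarrow> (\<forall>B\<in>J. \<exists>S\<subseteq>I. B = \<Union>S)"

definition one_p :: "nat \<Rightarrow> nat set set" where
  "one_p n = {{i, n+i} | i. i \<in> {1..n}}"

definition sym_part :: "nat \<Rightarrow> nat set set set" where
  "sym_part n = {P \<in> pmon n. \<forall>B\<in>P. \<exists>i j. i \<in> {1..n} \<and> j \<in> {1..n} \<and> B = {i, n+j}}"

definition s_p :: "nat \<Rightarrow> nat \<Rightarrow> nat set set" where
  "s_p n i = {{k, n + (if k = i then i+1 else if k = i+1 then i else k)} | k. k \<in> {1..n}}"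

definition linear_part :: "nat set set \<Rightarrow> bool" where
  "linear_part P \<longleftrightarrow> (\<forall>B\<in>P. \<exists>a b. B = {a..b})"

definition restrict_part :: "nat set set \<Rightarrow> nat set \<Rightarrow> nat set set" where
  "restrict_part P A = {B \<inter> A | B. B \<in> P \<and> B \<inter> A \<noteq> {}}"

definition boxed :: "nat \<Rightarrow> nat set set \<Rightarrow> bool" where
  "boxed n J \<longleftrightarrow> J \<in> pmon n \<and> refines (one_p n) J \<and> linear_part (restrict_part J {1..n})"

definition BR :: "nat \<Rightarrow> (nat set set \<times> nat set set) set" where
  "BR n = {(I, J). I \<in> sym_part n \<and> boxed n J \<and> refines I J}"

definition bmult :: "nat \<Rightarrow> nat set set \<times> nat set set \<Rightarrow> nat set set \<times> nat set set
                     \<Rightarrow> nat set set \<times> nat set set" where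
  "bmult n x y = (pmult n (fst x) (fst y), pmult n (snd x) (snd y))"

definition b_p :: "nat \<Rightarrow> nat \<Rightarrow> nat set set" where
  "b_p n i = (one_p n - {{i, n+i}, {i+1, n+i+1}}) \<union> {{i, i+1, n+i, n+i+1}}"

datatype gen = E nat | Z nat

definition gens :: "nat \<Rightarrow> gen set" where
  "gens n = {E i | i. 1 \<le> i \<and> i < n} \<union> {Z i | i. 1 \<le> i \<and> i < n}"

fun gen_val :: "nat \<Rightarrow> gen \<Rightarrow> nat set set \<times> nat set set" where
  "gen_val n (E i) = (one_p n, b_p n i)"
| "gen_val n (Z i) = (s_p n i, b_p n i)"

fun eval_word :: "nat \<Rightarrow> gen list \<Rightarrow> nat set set \<times> nat set set" where
  "eval_word n [] = (one_p n, one_p n)"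
| "eval_word n (g # w) = bmult n (gen_val n g) (eval_word n w)"

definition rels :: "nat \<Rightarrow> (gen list \<times> gen list) set" where
  "rels n =
     {([E i, E i], [E i]) | i. 1 \<le> i \<and> i < n}
   \<union> {([E i, E j], [E j, E i]) | i j. 1 \<le> i \<and> i < n \<and> 1 \<le> j \<and> j < n}
   \<union> {([Z i, Z j, Z i], [Z j, Z i, Z j]) | i j. 1 \<le> i \<and> i < n \<and> 1 \<le> j \<and> j < n \<and> (i = j + 1 \<or> j = i + 1)}
   \<union> {([Z i, Z j], [Z j, Z i]) | i j. 1 \<le> i \<and> i < n \<and> 1 \<le> j \<and> j < n \<and> (i > j + 1 \<or> j > i + 1)}
   \<union> {([E i, Z j], [Z j, E i]) | i j. 1 \<le> i \<and> i < n \<and> 1 \<le> j \<and> j < n}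
   \<union> {([Z i, Z i], [E i]) | i. 1 \<le> i \<and> i < n}
   \<union> {([E i, Z i], [Z i]) | i. 1 \<le> i \<and> i < n}"

inductive wcong :: "(gen list \<times> gen list) set \<Rightarrow> gen list \<Rightarrow> gen list \<Rightarrow> bool"
  for R where
  rel: "(l, r) \<in> R \<Longrightarrow> wcong R (u @ l @ v) (u @ r @ v)"
| refl: "wcong R w w"
| sym: "wcong R u v \<Longrightarrow> wcong R v u"
| trans: "wcong R u v \<Longrightarrow> wcong R v w \<Longrightarrow> wcong R u w"

end

theory Submission
  imports Defs
begin


definition sw :: "nat \<Rightarrow> nat \<Rightarrow> nat" where
  "sw i k = (if k = i then i+1 else if k = i+1 then i else k)"

fun perm_of :: "gen list \<Rightarrow> nat \<Rightarrow> nat" where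
  "perm_of [] = id"
| "perm_of (E i # w) = perm_of w"
| "perm_of (Z i # w) = perm_of w \<circ> sw i"

fun idx_of :: "gen list \<Rightarrow> nat set" where
  "idx_of [] = {}"
| "idx_of (E i # w) = insert i (idx_of w)"
| "idx_of (Z i # w) = insert i (idx_of w)"

definition cyc :: "nat \<Rightarrow> nat \<Rightarrow> gen list" where
  "cyc j k = map Z [j..<Suc k]"

fun normal :: "nat \<Rightarrow> gen list set" where
  "normal 0 = {[]}"
| "normal (Suc m) = {cyc j (Suc m) @ x | j x. 1 \<le> j \<and> j \<le> Suc (Suc m) \<and> x \<in> normal m}"

abbreviation cg :: "nat \<Rightarrow> gen list \<Rightarrow> gen list \<Rightarrow> bool" where
  "cg n \<equiv> wcong (rels n)"

lemma wcong_ctx: "wcong R u v \<Longrightarrow> wcong R (x @ u @ y) (x @ v @ y)"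
proof (induction rule: wcong.induct)
  case (rel l r u v)
  then show ?case using wcong.rel[of l r R "x @ u" "v @ y"] by simp
next
  case (refl w) then show ?case by (rule wcong.refl)
next
  case (sym u v) then show ?case by (blast intro: wcong.sym)
next
  case (trans u v w) then show ?case by (blast intro: wcong.trans)
qed

lemma wcong_pre: "wcong R u v \<Longrightarrow> wcong R (x @ u) (x @ v)"
  using wcong_ctx[of R u v x "[]"] by simp

lemma wcong_post: "wcong R u v \<Longrightarrow> wcong R (u @ y) (v @ y)"
  using wcong_ctx[of R u v "[]" y] by simp

lemma wcong_Cons: "wcong R u v \<Longrightarrow> wcong R (g # u) (g # v)"
  using wcong_pre[of R u v "[g]"] by simp

lemma wcong_rel': "(l, r) \<in> R \<Longrightarrow> wcong R (x @ l @ y) (x @ r @ y)"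
  by (rule wcong.rel)

lemma wcong_rel0: "(l, r) \<in> R \<Longrightarrow> wcong R (l @ y) (r @ y)"
  using wcong.rel[of l r R "[]" y] by simp

lemma gens_iff: "g \<in> gens n \<longleftrightarrow> (case g of E i \<Rightarrow> 1 \<le> i \<and> i < n | Z i \<Rightarrow> 1 \<le> i \<and> i < n)"
  by (cases g) (auto simp: gens_def)

lemma rel_EE: "1 \<le> a \<Longrightarrow> a < n \<Longrightarrow> 1 \<le> b \<Longrightarrow> b < n \<Longrightarrow> ([E a, E b], [E b, E a]) \<in> rels n"
  unfolding rels_def by blast
lemma rel_EZ: "1 \<le> a \<Longrightarrow> a < n \<Longrightarrow> 1 \<le> b \<Longrightarrow> b < n \<Longrightarrow> ([E a, Z b], [Z b, E a]) \<in> rels n"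
  unfolding rels_def by blast
lemma rel_EE1: "1 \<le> a \<Longrightarrow> a < n \<Longrightarrow> ([E a, E a], [E a]) \<in> rels n"
  unfolding rels_def by blast
lemma rel_ZZ: "1 \<le> a \<Longrightarrow> a < n \<Longrightarrow> ([Z a, Z a], [E a]) \<in> rels n"
  unfolding rels_def by blast
lemma rel_EZ1: "1 \<le> a \<Longrightarrow> a < n \<Longrightarrow> ([E a, Z a], [Z a]) \<in> rels n"
  unfolding rels_def by blast
lemma rel_braid: "1 \<le> a \<Longrightarrow> a < n \<Longrightarrow> 1 \<le> b \<Longrightarrow> b < n \<Longrightarrow> b = a + 1 \<Longrightarrow>
   ([Z a, Z b, Z a], [Z b, Z a, Z b]) \<in> rels n"
  unfolding rels_def by blast
lemma rel_comm: "1 \<le> a \<Longrightarrow> a < n \<Longrightarrow> 1 \<le> b \<Longrightarrow> b < n \<Longrightarrow> a > b + 1 \<or> b > a + 1 \<Longrightarrow>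
   ([Z a, Z b], [Z b, Z a]) \<in> rels n"
  unfolding rels_def by blast

lemma E_comm_gen:
  assumes "1 \<le> a" "a < n" "g \<in> gens n"
  shows "cg n ([E a, g] @ y) ([g, E a] @ y)"
proof (cases g)
  case (E b) then show ?thesis using assms wcong_rel0[OF rel_EE[of a n b], of y] by (auto simp: gens_iff)
next
  case (Z b) then show ?thesis using assms wcong_rel0[OF rel_EZ[of a n b], of y] by (auto simp: gens_iff)
qed

lemma E_comm:
  assumes "1 \<le> a" "a < n" "set w \<subseteq> gens n"
  shows "cg n (E a # w) (w @ [E a])"
  using assms(3)
proof (induction w)
  case Nil then show ?case by (simp add: wcong.refl)
next
  case (Cons g w)
  have 1: "cg n (E a # g # w) (g # E a # w)" using E_comm_gen[OF assms(1,2), of g w] Cons.prems by simp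
  have 2: "cg n (g # E a # w) (g # w @ [E a])" using Cons by (intro wcong_Cons) auto
  show ?case using wcong.trans[OF 1 2] by simp
qed

lemma Es_comm:
  assumes "set l \<subseteq> {1..<n}" "set w \<subseteq> gens n"
  shows "cg n (map E l @ w) (w @ map E l)"
  using assms(1)
proof (induction l)
  case Nil then show ?case by (simp add: wcong.refl)
next
  case (Cons a l)
  have 1: "cg n (E a # map E l @ w) (E a # w @ map E l)" using Cons by (intro wcong_Cons) auto
  have 2: "cg n (E a # w @ map E l) (w @ E a # map E l)"
    using wcong_post[OF E_comm[of a n w], of "map E l"] Cons.prems assms(2) by auto
  show ?case using wcong.trans[OF 1 2] by simp
qed

lemma E_absorb:
  assumes "a \<in> set l" "set l \<subseteq> {1..<n}"
  shows "cg n (E a # map E l @ y) (map E l @ y)"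
  using assms
proof (induction l)
  case Nil then show ?case by simp
next
  case (Cons b l)
  show ?case
  proof (cases "a = b")
    case True
    then show ?thesis using Cons.prems wcong_rel0[OF rel_EE1[of a n], of "map E l @ y"] by auto
  next
    case False
    then have a: "a \<in> set l" using Cons.prems by auto
    have 1: "cg n (E a # E b # map E l @ y) (E b # E a # map E l @ y)"
      using Cons.prems a wcong_rel0[OF rel_EE[of a n b], of "map E l @ y"] by auto
    have 2: "cg n (E b # E a # map E l @ y) (E b # map E l @ y)"
      using Cons a by (intro wcong_Cons) auto
    show ?thesis using wcong.trans[OF 1 2] by simp
  qed
qed

lemma Es_absorb:
  assumes "set l1 \<subseteq> set l2" "set l2 \<subseteq> {1..<n}"
  shows "cg n (map E l1 @ map E l2) (map E l2)"
  using assms(1)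
proof (induction l1)
  case Nil then show ?case by (simp add: wcong.refl)
next
  case (Cons a l1)
  have 1: "cg n (E a # map E l1 @ map E l2) (E a # map E l2)" using Cons by (intro wcong_Cons) auto
  have 2: "cg n (E a # map E l2) (map E l2)" using E_absorb[of a l2 n "[]"] Cons.prems assms(2) by auto
  show ?case using wcong.trans[OF 1 2] by simp
qed

lemma Es_valid: "set l \<subseteq> {1..<n} \<Longrightarrow> set (map E l) \<subseteq> gens n"
  by (auto simp: gens_def)

lemma Es_eq:
  assumes "set l1 = set l2" "set l2 \<subseteq> {1..<n}"
  shows "cg n (map E l1) (map E l2)"
proof -
  have a: "cg n (map E l2 @ map E l1) (map E l1)" using Es_absorb[of l2 l1 n] assms by auto
  have b: "cg n (map E l1 @ map E l2) (map E l2)" using Es_absorb[of l1 l2 n] assms by auto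
  have c: "cg n (map E l2 @ map E l1) (map E l1 @ map E l2)"
    using Es_comm[of l2 n "map E l1"] assms Es_valid[of l1 n] by auto
  show ?thesis using wcong.trans[OF wcong.sym[OF a] wcong.trans[OF c b]] .
qed

lemma idx_append[simp]: "idx_of (u @ v) = idx_of u \<union> idx_of v"
  by (induction u rule: idx_of.induct) auto

lemma perm_append[simp]: "perm_of (u @ v) = perm_of v \<circ> perm_of u"
proof (induction u)
  case (Cons g u) then show ?case by (cases g) (simp_all add: comp_assoc)
qed simp

lemma idx_mapE[simp]: "idx_of (map E l) = set l"
  by (induction l) auto

lemma idx_mapZ[simp]: "idx_of (map Z l) = set l"
  by (induction l) auto

lemma perm_mapE[simp]: "perm_of (map E l) = id"
  by (induction l) auto

lemma idx_valid: "set w \<subseteq> gens n \<Longrightarrow> idx_of w \<subseteq> {1..<n}"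
  by (induction w rule: idx_of.induct) (auto simp: gens_def)

lemma cyc_Cons: "j \<le> k \<Longrightarrow> cyc j k = Z j # cyc (Suc j) k"
  unfolding cyc_def by (simp add: upt_conv_Cons)

lemma cyc_Nil: "k < j \<Longrightarrow> cyc j k = []"
  unfolding cyc_def by simp

lemma idx_cyc[simp]: "idx_of (cyc j k) = {j..k}"
  unfolding cyc_def by auto

lemma Nil_normal: "[] \<in> normal m"
proof (induction m)
  case (Suc m)
  have "[] = cyc (Suc (Suc m)) (Suc m) @ []" by (simp add: cyc_def)
  then show ?case using Suc by fastforce
qed simp

lemma normal_idx: "w \<in> normal m \<Longrightarrow> idx_of w \<subseteq> {1..m}"
  by (induction m arbitrary: w) fastforce+

lemma normal_Z: "w \<in> normal m \<Longrightarrow> g \<in> set w \<Longrightarrow> \<exists>k. g = Z k"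
  by (induction m arbitrary: w) (auto simp: cyc_def)

lemma normal_valid: "w \<in> normal m \<Longrightarrow> m < n \<Longrightarrow> set w \<subseteq> gens n"
proof
  fix g assume a: "w \<in> normal m" "m < n" "g \<in> set w"
  then obtain k where g: "g = Z k" using normal_Z by blast
  have "k \<in> idx_of w" using a(3) g by (induction w rule: idx_of.induct) auto
  then have "1 \<le> k" "k \<le> m" using normal_idx[OF a(1)] by auto
  then show "g \<in> gens n" using g a(2) by (auto simp: gens_def)
qed

lemma Z_comm_list:
  assumes "\<forall>k\<in>set ks. (k > i + 1 \<or> i > k + 1) \<and> 1 \<le> k \<and> k < n" "1 \<le> i" "i < n"
  shows "cg n (Z i # map Z ks @ y) (map Z ks @ Z i # y)"
  using assms(1)
proof (induction ks)
  case Nil then show ?case by (simp add: wcong.refl)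
next
  case (Cons k ks)
  have 1: "cg n (Z i # Z k # map Z ks @ y) (Z k # Z i # map Z ks @ y)"
    using Cons.prems assms(2,3) wcong_rel0[OF rel_comm[of i n k], of "map Z ks @ y"] by auto
  have 2: "cg n (Z k # Z i # map Z ks @ y) (Z k # map Z ks @ Z i # y)"
    using Cons by (intro wcong_Cons) auto
  show ?case using wcong.trans[OF 1 2] by simp
qed

lemma prefix:
  assumes "w \<in> normal m" "1 \<le> i" "i \<le> m" "m < n" "i \<in> set T" "idx_of w \<subseteq> set T" "set T \<subseteq> {1..<n}"
  shows "\<exists>w'\<in>normal m. idx_of w' \<subseteq> set T \<and> cg n (map E T @ Z i # w) (map E T @ w')"
  using assms
proof (induction m arbitrary: i w)
  case 0 then show ?case by simp
next
  case (Suc m)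
  from Suc.prems(1) obtain j x where w: "w = cyc j (Suc m) @ x" and j: "1 \<le> j" "j \<le> Suc (Suc m)"
    and x: "x \<in> normal m" by auto
  have idxx: "idx_of x \<subseteq> set T" "{j..Suc m} \<subseteq> set T" using Suc.prems(6) w by auto
  have ET: "set (map E T) \<subseteq> gens n" using Es_valid Suc.prems(7) by blast
  have cycv: "set (cyc j (Suc m)) \<subseteq> gens n" using Suc.prems(4) j by (auto simp: cyc_def gens_def)
  have finish: "?case" if "\<exists>i'. 1 \<le> i' \<and> i' \<le> m \<and> i' \<in> set T \<and> cg n (Z i # cyc j (Suc m) @ x) (cyc j (Suc m) @ Z i' # x)"
  proof -
    from that obtain i' where h: "1 \<le> i' \<and> i' \<le> m \<and> i' \<in> set T \<and> cg n (Z i # cyc j (Suc m) @ x) (cyc j (Suc m) @ Z i' # x)" ..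
    have i': "1 \<le> i'" "i' \<le> m" "i' \<in> set T" and c: "cg n (Z i # cyc j (Suc m) @ x) (cyc j (Suc m) @ Z i' # x)"
      using h by simp_all
    have "\<exists>x'\<in>normal m. idx_of x' \<subseteq> set T \<and> cg n (map E T @ Z i' # x) (map E T @ x')"
      by (rule Suc.IH[OF x i'(1,2) _ i'(3) idxx(1) Suc.prems(7)]) (use Suc.prems(4) in simp)
    then obtain x' where x': "x' \<in> normal m" and h2: "idx_of x' \<subseteq> set T \<and> cg n (map E T @ Z i' # x) (map E T @ x')" ..
    have x'2: "idx_of x' \<subseteq> set T" and cx: "cg n (map E T @ Z i' # x) (map E T @ x')" using h2 by simp_all
    have c1: "cg n (map E T @ Z i # w) (map E T @ cyc j (Suc m) @ Z i' # x)"
      using wcong_pre[OF c, of "map E T"] w by simp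
    have c2: "cg n (map E T @ cyc j (Suc m) @ Z i' # x) (cyc j (Suc m) @ map E T @ Z i' # x)"
      using wcong_post[OF Es_comm[OF Suc.prems(7) cycv], of "Z i' # x"] by simp
    have c3: "cg n (cyc j (Suc m) @ map E T @ Z i' # x) (cyc j (Suc m) @ map E T @ x')"
      using wcong_pre[OF cx] by simp
    have c4: "cg n (cyc j (Suc m) @ map E T @ x') (map E T @ cyc j (Suc m) @ x')"
      using wcong.sym[OF wcong_post[OF Es_comm[OF Suc.prems(7) cycv], of "x'"]] by simp
    have "cyc j (Suc m) @ x' \<in> normal (Suc m)" unfolding normal.simps mem_Collect_eq
      by (intro exI[of _ j] exI[of _ x']) (use x' j in simp)
    moreover have "idx_of (cyc j (Suc m) @ x') \<subseteq> set T" using x' x'2 idxx by simp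
    ultimately show ?thesis using wcong.trans[OF c1 wcong.trans[OF c2 wcong.trans[OF c3 c4]]] by blast
  qed
  consider "Suc i = j" | "i = j" | "Suc i < j" | "j < i" by linarith
  then show ?case
  proof cases
    case 1
    have "Z i # w = cyc i (Suc m) @ x" using w 1 cyc_Cons[of i "Suc m"] Suc.prems(3) by simp
    moreover have "cyc i (Suc m) @ x \<in> normal (Suc m)" unfolding normal.simps mem_Collect_eq
      by (intro exI[of _ i] exI[of _ x]) (use x Suc.prems(2,3) in auto)
    moreover have "{i..Suc m} \<subseteq> insert i {Suc i..Suc m}" by auto
    then have "idx_of (cyc i (Suc m) @ x) \<subseteq> set T" using idxx Suc.prems(5) 1 by auto
    ultimately show ?thesis by (metis wcong.refl)
  next
    case 2
    note ij = 2
    define r where "r = cyc (Suc j) (Suc m) @ x"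
    have wr: "w = Z i # r" using w ij cyc_Cons[of j "Suc m"] Suc.prems(3) r_def by simp
    have h1: "cg n (map E T @ Z i # w) (map E T @ E i # r)"
      using wcong.rel[OF rel_ZZ[of i n], of "map E T" r] wr Suc.prems by simp
    have h2: "cg n (map E T @ [E i]) ([E i] @ map E T)"
      using Es_comm[of T n "[E i]"] Suc.prems by (auto simp: gens_def)
    have h3: "cg n (map E T @ E i # r) (E i # map E T @ r)" using wcong_post[OF h2, of r] by simp
    have h4: "cg n (E i # map E T @ r) (map E T @ r)" using E_absorb Suc.prems by blast
    have "r \<in> normal (Suc m)" unfolding normal.simps mem_Collect_eq r_def
      by (intro exI[of _ "Suc j"] exI[of _ x]) (use x j ij Suc.prems(3) in auto)
    moreover have "idx_of r \<subseteq> set T" using r_def idxx by auto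
    ultimately show ?thesis using wcong.trans[OF h1 wcong.trans[OF h3 h4]] by blast
  next
    case 3
    have key: "\<exists>i'. 1 \<le> i' \<and> i' \<le> m \<and> i' \<in> set T \<and> cg n (Z i # cyc j (Suc m) @ x) (cyc j (Suc m) @ Z i' # x)"
    proof (intro exI conjI)
      show "cg n (Z i # cyc j (Suc m) @ x) (cyc j (Suc m) @ Z i # x)"
        unfolding cyc_def using 3 j Suc.prems by (intro Z_comm_list) auto
    qed (use 3 j Suc.prems(2,5) in auto)
    then show ?thesis by (rule finish)
  next
    case 4
    define A where "A = map Z [j..<i-1]"
    define B where "B = map Z [Suc i..<Suc (Suc m)]"
    have split: "cyc j (Suc m) = A @ [Z (i-1), Z i] @ B"
    proof -
      have "[j..<Suc (Suc m)] = [j..<i-1] @ [i-1..<Suc (Suc m)]" using 4 Suc.prems(3)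
        using upt_add_eq_append[of j "i-1" "Suc (Suc m) - (i-1)"] by simp
      moreover have "[i-1..<Suc (Suc m)] = [i-1, i] @ [Suc i..<Suc (Suc m)]" using 4 Suc.prems(3)
        by (cases i) (auto simp: upt_conv_Cons)
      ultimately show ?thesis by (simp add: cyc_def A_def B_def)
    qed
    have s1: "cg n (Z i # A @ (Z (i-1) # Z i # B @ x)) (A @ Z i # (Z (i-1) # Z i # B @ x))"
      unfolding A_def using 4 j Suc.prems by (intro Z_comm_list) auto
    have s2: "cg n (A @ [Z i, Z (i-1), Z i] @ (B @ x)) (A @ [Z (i-1), Z i, Z (i-1)] @ (B @ x))"
      using wcong.sym[OF wcong.rel[OF rel_braid[of "i-1" n i], of A "B @ x"]] 4 j Suc.prems by auto
    have "cg n (Z (i-1) # B @ x) (B @ Z (i-1) # x)"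
      unfolding B_def using 4 j Suc.prems by (intro Z_comm_list) auto
    from wcong_pre[OF this, of "A @ [Z (i-1), Z i]"]
    have s3: "cg n (A @ [Z (i-1), Z i] @ (Z (i-1) # B @ x)) (A @ [Z (i-1), Z i] @ (B @ Z (i-1) # x))"
      by simp
    have key: "\<exists>i'. 1 \<le> i' \<and> i' \<le> m \<and> i' \<in> set T \<and> cg n (Z i # cyc j (Suc m) @ x) (cyc j (Suc m) @ Z i' # x)"
    proof (intro exI conjI)
      show "cg n (Z i # cyc j (Suc m) @ x) (cyc j (Suc m) @ Z (i-1) # x)"
      proof -
        have s2': "cg n (A @ Z i # Z (i-1) # Z i # B @ x) (A @ Z (i-1) # Z i # Z (i-1) # B @ x)"
          using s2 by simp
        have s3': "cg n (A @ Z (i-1) # Z i # Z (i-1) # B @ x) (A @ Z (i-1) # Z i # B @ Z (i-1) # x)"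
          using s3 by simp
        show ?thesis using wcong.trans[OF s1 wcong.trans[OF s2' s3']] split by simp
      qed
      have "i - 1 \<in> {j..Suc m}" using 4 Suc.prems(3) by auto
      then show "i - 1 \<in> set T" using idxx(2) by blast
    qed (use 4 j Suc.prems(2,3) in auto)
    then show ?thesis by (rule finish)
  qed
qed

lemma normalize:
  assumes "set w \<subseteq> gens n"
  shows "\<exists>l N. N \<in> normal (n-1) \<and> set l = idx_of w \<and> idx_of N \<subseteq> set l \<and> cg n w (map E l @ N)"
  using assms
proof (induction w)
  case Nil
  show ?case by (rule exI[of _ "[]"], rule exI[of _ "[]"]) (simp add: Nil_normal wcong.refl)
next
  case (Cons g w)
  from Cons obtain l N where N: "N \<in> normal (n-1)" and l: "set l = idx_of w" "idx_of N \<subseteq> set l"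
    and c: "cg n w (map E l @ N)" by auto
  have lv: "set l \<subseteq> {1..<n}" using l idx_valid Cons.prems by auto
  show ?case
  proof (cases g)
    case (E a)
    have "cg n (g # w) (map E (a # l) @ N)" using wcong_Cons[OF c, of g] E by simp
    then show ?thesis using N l E by (intro exI[of _ "a # l"] exI[of _ N]) auto
  next
    case (Z a)
    have a: "1 \<le> a" "a < n" using Cons.prems Z by (auto simp: gens_def)
    have s1: "cg n (Z a # w) (Z a # map E l @ N)" using wcong_Cons[OF c] .
    have s2: "cg n (Z a # map E l @ N) (E a # Z a # map E l @ N)"
      using wcong.sym[OF wcong_rel0[OF rel_EZ1[OF a], of "map E l @ N"]] by simp
    have "cg n (map E l @ [Z a]) ([Z a] @ map E l)" using Es_comm[OF lv, of "[Z a]"] a by (simp add: gens_def)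
    from wcong_post[OF wcong.sym[OF this], of N]
    have s3: "cg n (E a # Z a # map E l @ N) (E a # map E l @ Z a # N)"
      by (intro wcong_Cons) simp
    have "\<exists>w'\<in>normal (n-1). idx_of w' \<subseteq> set (a # l) \<and> cg n (map E (a # l) @ Z a # N) (map E (a # l) @ w')"
      by (rule prefix[OF N]) (use a l lv in auto)
    then obtain N' where N': "N' \<in> normal (n-1)" and h: "idx_of N' \<subseteq> set (a # l) \<and> cg n (map E (a # l) @ Z a # N) (map E (a # l) @ N')" ..
    have s4: "cg n (E a # map E l @ Z a # N) (map E (a # l) @ N')" using h by simp
    have "cg n (g # w) (map E (a # l) @ N')" using wcong.trans[OF s1 wcong.trans[OF s2 wcong.trans[OF s3 s4]]] Z by simp
    then show ?thesis using N' h l Z by (intro exI[of _ "a # l"] exI[of _ N']) auto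
  qed
qed

lemma sw_sw[simp]: "sw i (sw i x) = x"
  by (simp add: sw_def)

lemma bij_sw: "bij (sw i)"
  by (rule o_bij[of "sw i"]) (auto simp: fun_eq_iff)

lemma bij_perm: "bij (perm_of w)"
proof (induction w)
  case (Cons g w)
  show ?case
  proof (cases g)
    case (E i) then show ?thesis using Cons by simp
  next
    case (Z i)
    have "bij (perm_of w \<circ> sw i)" by (rule bij_comp[OF bij_sw Cons.IH])
    then show ?thesis using Z by (simp only: perm_of.simps)
  qed
qed (simp add: bij_id[unfolded id_def])

lemma perm_fix: "(\<forall>k\<in>idx_of w. x \<noteq> k \<and> x \<noteq> Suc k) \<Longrightarrow> perm_of w x = x"
proof (induction w)
  case (Cons g w) then show ?case by (cases g) (auto simp: sw_def)
qed simp

lemma perm_cyc: "j \<le> Suc k \<Longrightarrow> perm_of (cyc j k) j = Suc k"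
proof (induction "Suc k - j" arbitrary: j)
  case 0 then show ?case by (simp add: cyc_def)
next
  case (Suc d)
  show ?case
  proof (cases "j = Suc k")
    case True then show ?thesis by (simp add: cyc_Nil)
  next
    case False
    then have "j \<le> k" using Suc.prems by simp
    then have "perm_of (cyc j k) j = perm_of (cyc (Suc j) k) (Suc j)"
      by (simp add: cyc_Cons sw_def)
    also have "\<dots> = Suc k" using Suc.hyps(1)[of "Suc j"] Suc.hyps(2) \<open>j \<le> k\<close> by simp
    finally show ?thesis .
  qed
qed

lemma normal_inj: "w \<in> normal m \<Longrightarrow> w' \<in> normal m \<Longrightarrow> perm_of w = perm_of w' \<Longrightarrow> w = w'"
proof (induction m arbitrary: w w')
  case 0 then show ?case by simp
next
  case (Suc m)
  from Suc.prems(1) obtain j x where w: "w = cyc j (Suc m) @ x" and j: "1 \<le> j" "j \<le> Suc (Suc m)"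
    and x: "x \<in> normal m" by auto
  from Suc.prems(2) obtain j' x' where w': "w' = cyc j' (Suc m) @ x'" and j': "1 \<le> j'" "j' \<le> Suc (Suc m)"
    and x': "x' \<in> normal m" by auto
  have fx: "perm_of x (Suc (Suc m)) = Suc (Suc m)"
    using normal_idx[OF x] by (intro perm_fix) auto
  have fx': "perm_of x' (Suc (Suc m)) = Suc (Suc m)"
    using normal_idx[OF x'] by (intro perm_fix) auto
  have "perm_of w j = Suc (Suc m)" using w perm_cyc[OF j(2)] fx by simp
  moreover have "perm_of w' j' = Suc (Suc m)" using w' perm_cyc[OF j'(2)] fx' by simp
  ultimately have "perm_of w j = perm_of w j'" using Suc.prems(3) by simp
  then have jj: "j = j'" using bij_perm[of w] by (auto dest: bij_is_inj injD)
  have "perm_of x \<circ> perm_of (cyc j (Suc m)) = perm_of x' \<circ> perm_of (cyc j (Suc m))"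
    using Suc.prems(3) w w' jj by (simp add: comp_def)
  then have "perm_of x = perm_of x'"
    using bij_perm[of "cyc j (Suc m)"] by (metis bij_is_surj surj_fun_eq)
  then have "x = x'" using Suc.IH[OF x x'] by simp
  then show ?case using w w' jj by simp
qed




definition permn :: "nat \<Rightarrow> (nat \<Rightarrow> nat) \<Rightarrow> bool" where
  "permn n \<sigma> \<longleftrightarrow> bij \<sigma> \<and> (\<forall>x. x \<notin> {1..n} \<longrightarrow> \<sigma> x = x)"

definition perm_part :: "nat \<Rightarrow> (nat \<Rightarrow> nat) \<Rightarrow> nat set set" where
  "perm_part n \<sigma> = (\<lambda>k. {k, n + \<sigma> k}) ` {1..n}"

lemma rel_of_eq: "rel_of P = {(x, y). \<exists>p\<in>P. x \<in> p \<and> y \<in> p}"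
  by (auto simp: rel_of_def)

lemma sym_rel_of: "sym (rel_of P)"
  by (auto simp: rel_of_def sym_def)

lemma partition_family:
  assumes "\<And>k. k \<in> K \<Longrightarrow> B k \<noteq> {}" "(\<Union>k\<in>K. B k) = A"
    "\<And>k k'. k \<in> K \<Longrightarrow> k' \<in> K \<Longrightarrow> B k \<inter> B k' \<noteq> {} \<Longrightarrow> B k = B k'"
  shows "partition_on A (B ` K)"
proof (rule partition_onI)
  show "\<Union>(B ` K) = A" using assms(2) by simp
  show "{} \<notin> B ` K" using assms(1) by (metis imageE)
  fix p q assume "p \<in> B ` K" "q \<in> B ` K" "p \<noteq> q"
  then show "disjnt p q" using assms(3) by (auto simp: disjnt_def)
qed

lemma pmult_calc:
  assumes P: "partition_on {1..3*n} P"
  and sub: "rel_of I \<union> rel_of ((\<lambda>B. (\<lambda>x. x + n) ` B) ` J) \<subseteq> rel_of P"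
  and cen: "\<forall>B\<in>P. \<exists>c\<in>B. \<forall>x\<in>B. (c, x) \<in> (rel_of I \<union> rel_of ((\<lambda>B. (\<lambda>x. x + n) ` B) ` J))\<^sup>+"
  shows "pmult n I J = {(\<lambda>x. if x > 2*n then x - n else x) ` (C - {n+1..2*n}) | C. C \<in> P \<and> C - {n+1..2*n} \<noteq> {}}"
proof -
  define r where "r = rel_of I \<union> rel_of ((\<lambda>B. (\<lambda>x. x + n) ` B) ` J)"
  have symr: "sym r" unfolding r_def by (intro sym_Un sym_rel_of)
  have eq: "equiv {1..3*n} (rel_of P)" using equiv_partition_on[OF P] by (simp add: rel_of_eq)
  have "r\<^sup>+ \<subseteq> (rel_of P)\<^sup>+" using sub unfolding r_def by (rule trancl_mono_subset)
  also have "\<dots> = rel_of P" using eq by (simp add: equiv_def trans_trancl)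
  finally have 1: "r\<^sup>+ \<subseteq> rel_of P" .
  have 2: "rel_of P \<subseteq> r\<^sup>+"
  proof
    fix p assume "p \<in> rel_of P"
    then obtain x y B where p: "p = (x, y)" and B: "B \<in> P" "x \<in> B" "y \<in> B" by (auto simp: rel_of_def)
    obtain c where c: "\<forall>z\<in>B. (c, z) \<in> r\<^sup>+" using cen B(1) r_def by blast
    have "(x, c) \<in> r\<^sup>+" using c B(2) symr sym_trancl by (metis symD)
    then show "p \<in> r\<^sup>+" using c B(3) p by auto
  qed
  have R: "r\<^sup>+ = rel_of P" using 1 2 by blast
  have Q: "{1..3*n} // rel_of P = P" using partition_on_eq_quotient[OF P] by (simp add: rel_of_eq)
  show ?thesis unfolding pmult_def Let_def r_def[symmetric] R Q by simp
qed

lemma permn_in: "permn n \<sigma> \<Longrightarrow> k \<in> {1..n} \<Longrightarrow> \<sigma> k \<in> {1..n}"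
  unfolding permn_def by (metis bij_pointE)

lemma permn_surj: "permn n \<sigma> \<Longrightarrow> y \<in> {1..n} \<Longrightarrow> \<exists>k\<in>{1..n}. \<sigma> k = y"
  unfolding permn_def by (metis bij_pointE)

lemma permn_inj: "permn n \<sigma> \<Longrightarrow> \<sigma> a = \<sigma> b \<Longrightarrow> a = b"
  unfolding permn_def by (metis bij_is_inj injD)

lemma permn_comp: "permn n \<sigma> \<Longrightarrow> permn n \<tau> \<Longrightarrow> permn n (\<tau> \<circ> \<sigma>)"
  unfolding permn_def by (auto intro: bij_comp)

lemma setcompr_img: "(\<And>k. k \<in> K \<Longrightarrow> Q (h k)) \<Longrightarrow> {g C | C. C \<in> h ` K \<and> Q C} = (\<lambda>k. g (h k)) ` K"
  by auto

lemma perm_mult: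
  assumes s: "permn n \<sigma>" and t: "permn n \<tau>"
  shows "pmult n (perm_part n \<sigma>) (perm_part n \<tau>) = perm_part n (\<tau> \<circ> \<sigma>)"
proof -
  define T where "T k = {k, n + \<sigma> k, 2*n + \<tau> (\<sigma> k)}" for k
  let ?P = "T ` {1..n}"
  have rng: "\<sigma> k \<in> {1..n} \<and> \<tau> (\<sigma> k) \<in> {1..n}" if "k \<in> {1..n}" for k
    using permn_in[OF s that] permn_in[OF t] by blast
  have mem: "(z \<le> n \<longrightarrow> z = k) \<and> (n < z \<and> z \<le> 2*n \<longrightarrow> z = n + \<sigma> k) \<and> (2*n < z \<longrightarrow> z = 2*n + \<tau> (\<sigma> k))"
    if "k \<in> {1..n}" "z \<in> T k" for k z
    using rng[OF that(1)] that by (auto simp: T_def)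
  have P: "partition_on {1..3*n} ?P"
  proof (rule partition_family)
    show "T k \<noteq> {}" for k by (simp add: T_def)
    show "(\<Union>k\<in>{1..n}. T k) = {1..3*n}"
    proof
      show "(\<Union>k\<in>{1..n}. T k) \<subseteq> {1..3*n}" using rng by (fastforce simp: T_def)
      show "{1..3*n} \<subseteq> (\<Union>k\<in>{1..n}. T k)"
      proof
        fix x assume x: "x \<in> {1..3*n}"
        consider "x \<le> n" | "n < x \<and> x \<le> 2*n" | "2*n < x" by linarith
        then show "x \<in> (\<Union>k\<in>{1..n}. T k)"
        proof cases
          case 1 then show ?thesis using x by (auto simp: T_def)
        next
          case 2
          then obtain k where "k \<in> {1..n}" "\<sigma> k = x - n" using permn_surj[OF s, of "x - n"] by force
          then show ?thesis using 2 by (auto simp: T_def intro!: bexI[of _ k])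
        next
          case 3
          then obtain k where "k \<in> {1..n}" "(\<tau> \<circ> \<sigma>) k = x - 2*n"
            using permn_surj[OF permn_comp[OF s t], of "x - 2*n"] x by force
          then show ?thesis using 3 by (auto simp: T_def intro!: bexI[of _ k])
        qed
      qed
    qed
    fix k k' assume k: "k \<in> {1..n}" "k' \<in> {1..n}" "T k \<inter> T k' \<noteq> {}"
    then obtain z where z: "z \<in> T k" "z \<in> T k'" by blast
    have "k = k'"
    proof -
      consider "z \<le> n" | "n < z \<and> z \<le> 2*n" | "2*n < z" by linarith
      then show ?thesis
      proof cases
        case 1 then show ?thesis using mem[OF k(1) z(1)] mem[OF k(2) z(2)] by simp
      next
        case 2 then have "\<sigma> k = \<sigma> k'" using mem[OF k(1) z(1)] mem[OF k(2) z(2)] by simp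
        then show ?thesis using permn_inj[OF s] by blast
      next
        case 3 then have "(\<tau> \<circ> \<sigma>) k = (\<tau> \<circ> \<sigma>) k'" using mem[OF k(1) z(1)] mem[OF k(2) z(2)] by simp
        then show ?thesis using permn_inj[OF permn_comp[OF s t]] by blast
      qed
    qed
    then show "T k = T k'" by simp
  qed
  define J' where "J' = (\<lambda>B. (\<lambda>x. x + n) ` B) ` perm_part n \<tau>"
  define r where "r = rel_of (perm_part n \<sigma>) \<union> rel_of J'"
  have jb: "(\<lambda>x. x + n) ` {j, n + \<tau> j} = {n + j, 2*n + \<tau> j}" for j by auto
  have J'_eq: "J' = (\<lambda>j. {n + j, 2*n + \<tau> j}) ` {1..n}"
    unfolding J'_def perm_part_def image_image jb ..
  have sub: "r \<subseteq> rel_of ?P"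
  proof
    fix p assume "p \<in> r"
    then consider (a) k where "k \<in> {1..n}" "p \<in> {k, n + \<sigma> k} \<times> {k, n + \<sigma> k}"
      | (b) j where "j \<in> {1..n}" "p \<in> {n + j, 2*n + \<tau> j} \<times> {n + j, 2*n + \<tau> j}"
      unfolding r_def J'_eq rel_of_def perm_part_def by blast
    then show "p \<in> rel_of ?P"
    proof cases
      case a then show ?thesis unfolding rel_of_def T_def by blast
    next
      case b
      then obtain k where "k \<in> {1..n}" "\<sigma> k = j" using permn_surj[OF s] by blast
      then show ?thesis using b unfolding rel_of_def T_def by blast
    qed
  qed
  have cen: "\<forall>B\<in>?P. \<exists>c\<in>B. \<forall>x\<in>B. (c, x) \<in> r\<^sup>+"
  proof
    fix B assume "B \<in> ?P"
    then obtain k where k: "k \<in> {1..n}" "B = T k" by blast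
    have r1: "(k, n + \<sigma> k) \<in> r" "(n + \<sigma> k, k) \<in> r"
      unfolding r_def rel_of_def perm_part_def using k by blast+
    have r2: "(n + \<sigma> k, 2*n + \<tau> (\<sigma> k)) \<in> r"
      unfolding r_def J'_eq rel_of_def using rng[OF k(1)] by blast
    have "(k, k) \<in> r\<^sup>+" using r1 by (meson r_into_trancl trancl_into_trancl)
    moreover have "(k, n + \<sigma> k) \<in> r\<^sup>+" using r1 by blast
    moreover have "(k, 2*n + \<tau> (\<sigma> k)) \<in> r\<^sup>+" using r1 r2 by (meson r_into_trancl trancl_into_trancl)
    ultimately show "\<exists>c\<in>B. \<forall>x\<in>B. (c, x) \<in> r\<^sup>+" using k by (auto simp: T_def)
  qed
  have "pmult n (perm_part n \<sigma>) (perm_part n \<tau>) =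
     {(\<lambda>x. if x > 2*n then x - n else x) ` (C - {n+1..2*n}) | C. C \<in> ?P \<and> C - {n+1..2*n} \<noteq> {}}"
    by (rule pmult_calc[OF P sub[unfolded r_def J'_def] cen[unfolded r_def J'_def]])
  also have "\<dots> = (\<lambda>k. (\<lambda>x. if x > 2*n then x - n else x) ` (T k - {n+1..2*n})) ` {1..n}"
    by (rule setcompr_img) (auto simp: T_def)
  also have "\<dots> = perm_part n (\<tau> \<circ> \<sigma>)"
    unfolding perm_part_def
  proof (rule image_cong[OF HOL.refl])
    fix k assume k: "k \<in> {1..n}"
    have "T k - {n+1..2*n} = {k, 2*n + \<tau> (\<sigma> k)}" using k rng[OF k] by (auto simp: T_def)
    then show "(\<lambda>x. if x > 2*n then x - n else x) ` (T k - {n+1..2*n}) = {k, n + (\<tau> \<circ> \<sigma>) k}"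
      using k rng[OF k] by auto
  qed
  finally show ?thesis .
qed

definition conn :: "nat set \<Rightarrow> nat \<Rightarrow> nat \<Rightarrow> bool" where
  "conn S a b \<longleftrightarrow> (\<forall>t. min a b \<le> t \<and> t < max a b \<longrightarrow> t \<in> S)"

definition blk :: "nat \<Rightarrow> nat set \<Rightarrow> nat \<Rightarrow> nat set" where
  "blk n S k = {a \<in> {1..n}. conn S a k}"

definition bpart :: "nat \<Rightarrow> nat set \<Rightarrow> nat set set" where
  "bpart n S = (\<lambda>k. blk n S k \<union> (\<lambda>x. x + n) ` blk n S k) ` {1..n}"

lemma conn_refl[simp]: "conn S a a"
  by (auto simp: conn_def)

lemma conn_sym: "conn S a b \<longleftrightarrow> conn S b a"
  by (simp add: conn_def min.commute max.commute)

lemma conn_trans: "conn S a b \<Longrightarrow> conn S b c \<Longrightarrow> conn S a c"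
  unfolding conn_def
proof (intro allI impI)
  fix t assume h: "\<forall>t. min a b \<le> t \<and> t < max a b \<longrightarrow> t \<in> S" "\<forall>t. min b c \<le> t \<and> t < max b c \<longrightarrow> t \<in> S"
    "min a c \<le> t \<and> t < max a c"
  have "(min a b \<le> t \<and> t < max a b) \<or> (min b c \<le> t \<and> t < max b c)" using h(3) by arith
  then show "t \<in> S" using h(1,2) by blast
qed

lemma conn_mono: "S \<subseteq> S' \<Longrightarrow> conn S a b \<Longrightarrow> conn S' a b"
  by (auto simp: conn_def)

lemma conn_Suc: "conn S a (Suc a) \<longleftrightarrow> a \<in> S"
proof
  assume "conn S a (Suc a)" then show "a \<in> S" by (auto simp: conn_def)
next
  assume a: "a \<in> S"
  show "conn S a (Suc a)" unfolding conn_def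
  proof (intro allI impI)
    fix t assume "min a (Suc a) \<le> t \<and> t < max a (Suc a)"
    then have "t = a" by simp
    then show "t \<in> S" using a by simp
  qed
qed

lemma blk_self: "k \<in> {1..n} \<Longrightarrow> k \<in> blk n S k"
  by (simp add: blk_def)

lemma blk_sub: "blk n S k \<subseteq> {1..n}"
  by (auto simp: blk_def)

lemma blk_eq: "a \<in> blk n S k \<Longrightarrow> blk n S a = blk n S k"
  unfolding blk_def by (auto intro: conn_trans simp: conn_sym)

lemma blk_meet: "blk n S k \<inter> blk n S k' \<noteq> {} \<Longrightarrow> blk n S k = blk n S k'"
  using blk_eq by blast

lemma blk_mono: "S \<subseteq> S' \<Longrightarrow> blk n S k \<subseteq> blk n S' k"
  unfolding blk_def using conn_mono by blast

lemma walk_up: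
  assumes "\<And>t. t \<in> U \<Longrightarrow> (t, Suc t) \<in> r\<^sup>*" "a \<le> b" "conn U a b"
  shows "(a, b) \<in> r\<^sup>*"
  using assms(2,3)
proof (induction b rule: dec_induct)
  case base then show ?case by simp
next
  case (step m)
  have "conn U a m" "m \<in> U" using step.prems step.hyps(1,2) by (auto simp: conn_def)
  then show ?case using step.IH assms(1) by (meson rtrancl_trans)
qed

lemma walk:
  assumes "\<And>t. t \<in> U \<Longrightarrow> (t, Suc t) \<in> r\<^sup>*" "sym r" "conn U a b"
  shows "(a, b) \<in> r\<^sup>*"
proof (cases "a \<le> b")
  case True then show ?thesis using walk_up[OF assms(1)] assms(3) by blast
next
  case False
  then have "(b, a) \<in> r\<^sup>*" using walk_up[where a=b and b=a, OF assms(1)] assms(3) by (simp add: conn_sym)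
  then show ?thesis using assms(2) by (meson symD sym_rtrancl)
qed

lemma bpart_mult:
  assumes S: "S \<subseteq> {1..<n}" and T: "T \<subseteq> {1..<n}"
  shows "pmult n (bpart n S) (bpart n T) = bpart n (S \<union> T)"
proof -
  define U where "U = S \<union> T"
  define Tr where "Tr k = blk n U k \<union> (\<lambda>x. x + n) ` blk n U k \<union> (\<lambda>x. x + 2*n) ` blk n U k" for k
  let ?P = "Tr ` {1..n}"
  have bs: "a \<in> blk n V k \<Longrightarrow> 1 \<le> a \<and> a \<le> n" for a V k by (simp add: blk_def)
  have trm: "\<exists>a\<in>blk n U k. z = a \<or> z = a + n \<or> z = a + 2*n" if "z \<in> Tr k" for z k
    using that unfolding Tr_def by blast
  have P: "partition_on {1..3*n} ?P"
  proof (rule partition_family)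
    show "Tr k \<noteq> {}" if "k \<in> {1..n}" for k using blk_self[OF that] by (auto simp: Tr_def)
    show "(\<Union>k\<in>{1..n}. Tr k) = {1..3*n}"
    proof
      show "(\<Union>k\<in>{1..n}. Tr k) \<subseteq> {1..3*n}"
      proof
        fix z assume "z \<in> (\<Union>k\<in>{1..n}. Tr k)"
        then obtain k a where "a \<in> blk n U k" "z = a \<or> z = a + n \<or> z = a + 2*n" using trm by blast
        then show "z \<in> {1..3*n}" using bs by fastforce
      qed
      show "{1..3*n} \<subseteq> (\<Union>k\<in>{1..n}. Tr k)"
      proof
        fix x assume x: "x \<in> {1..3*n}"
        consider "x \<le> n" | "n < x \<and> x \<le> 2*n" | "2*n < x" by linarith
        then show "x \<in> (\<Union>k\<in>{1..n}. Tr k)"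
        proof cases
          case 1 then show ?thesis using x blk_self[of x n U] by (auto simp: Tr_def)
        next
          case 2
          then have xn: "x - n \<in> {1..n}" by auto
          then have "x - n \<in> blk n U (x - n)" by (rule blk_self)
          then have "x - n + n \<in> Tr (x - n)" unfolding Tr_def by blast
          moreover have "x - n + n = x" using 2 by simp
          ultimately show ?thesis using xn by auto
        next
          case 3
          then have xn: "x - 2*n \<in> {1..n}" using x by auto
          then have "x - 2*n \<in> blk n U (x - 2*n)" by (rule blk_self)
          then have "x - 2*n + 2*n \<in> Tr (x - 2*n)" unfolding Tr_def by blast
          moreover have "x - 2*n + 2*n = x" using 3 by simp
          ultimately show ?thesis using xn by auto
        qed
      qed
    qed
    fix k k' assume k: "k \<in> {1..n}" "k' \<in> {1..n}" "Tr k \<inter> Tr k' \<noteq> {}"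
    then obtain z where z: "z \<in> Tr k" "z \<in> Tr k'" by blast
    obtain a where a: "a \<in> blk n U k" "z = a \<or> z = a + n \<or> z = a + 2*n" using trm[OF z(1)] by blast
    obtain a' where a': "a' \<in> blk n U k'" "z = a' \<or> z = a' + n \<or> z = a' + 2*n" using trm[OF z(2)] by blast
    have "a = a'" using a a' bs[OF a(1)] bs[OF a'(1)] by auto
    then have "blk n U k = blk n U k'" using a(1) a'(1) blk_meet by blast
    then show "Tr k = Tr k'" by (simp add: Tr_def)
  qed
  define J' where "J' = (\<lambda>B. (\<lambda>x. x + n) ` B) ` bpart n T"
  define r where "r = rel_of (bpart n S) \<union> rel_of J'"
  have jb: "(\<lambda>x. x + n) ` (blk n T k \<union> (\<lambda>x. x + n) ` blk n T k) = (\<lambda>x. x + n) ` blk n T k \<union> (\<lambda>x. x + 2*n) ` blk n T k" for k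
    by (auto simp: image_image image_Un)
  have J'_eq: "J' = (\<lambda>k. (\<lambda>x. x + n) ` blk n T k \<union> (\<lambda>x. x + 2*n) ` blk n T k) ` {1..n}"
    unfolding J'_def bpart_def image_image jb ..
  have SU: "S \<subseteq> U" "T \<subseteq> U" by (auto simp: U_def)
  have sub: "r \<subseteq> rel_of ?P"
  proof
    fix p assume "p \<in> r"
    then consider (a) k where "k \<in> {1..n}" "p \<in> (blk n S k \<union> (\<lambda>x. x + n) ` blk n S k) \<times> (blk n S k \<union> (\<lambda>x. x + n) ` blk n S k)"
      | (b) k where "k \<in> {1..n}" "p \<in> ((\<lambda>x. x + n) ` blk n T k \<union> (\<lambda>x. x + 2*n) ` blk n T k) \<times> ((\<lambda>x. x + n) ` blk n T k \<union> (\<lambda>x. x + 2*n) ` blk n T k)"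
      unfolding r_def J'_eq rel_of_def bpart_def by blast
    then show "p \<in> rel_of ?P"
    proof cases
      case a
      have "blk n S k \<union> (\<lambda>x. x + n) ` blk n S k \<subseteq> Tr k" using blk_mono[OF SU(1)] unfolding Tr_def by blast
      then show ?thesis using a unfolding rel_of_def by blast
    next
      case b
      have "(\<lambda>x. x + n) ` blk n T k \<union> (\<lambda>x. x + 2*n) ` blk n T k \<subseteq> Tr k" using blk_mono[OF SU(2)] unfolding Tr_def by blast
      then show ?thesis using b unfolding rel_of_def by blast
    qed
  qed
  have symr: "sym r" unfolding r_def by (intro sym_Un sym_rel_of)
  have inS: "(a, a + n) \<in> r" "(a + n, a) \<in> r" "(a, a) \<in> r" if "a \<in> {1..n}" for a
  proof -
    have "a \<in> blk n S a" "a + n \<in> (\<lambda>x. x + n) ` blk n S a" using blk_self[OF that] by auto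
    then have "{a, a + n} \<subseteq> blk n S a \<union> (\<lambda>x. x + n) ` blk n S a" by blast
    moreover have "blk n S a \<union> (\<lambda>x. x + n) ` blk n S a \<in> bpart n S" using that unfolding bpart_def by blast
    ultimately show "(a, a + n) \<in> r" "(a + n, a) \<in> r" "(a, a) \<in> r" unfolding r_def rel_of_def by blast+
  qed
  have inT: "(a + n, a + 2*n) \<in> r" if "a \<in> {1..n}" for a
  proof -
    have "a + n \<in> (\<lambda>x. x + n) ` blk n T a" "a + 2*n \<in> (\<lambda>x. x + 2*n) ` blk n T a" using blk_self[OF that] by auto
    moreover have "(\<lambda>x. x + n) ` blk n T a \<union> (\<lambda>x. x + 2*n) ` blk n T a \<in> J'" using that unfolding J'_eq by blast
    ultimately show ?thesis unfolding r_def rel_of_def by blast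
  qed
  have steps: "(t, Suc t) \<in> r\<^sup>*" if "t \<in> U" for t
  proof -
    have t: "t \<in> {1..n}" "Suc t \<in> {1..n}" using that S T U_def by auto
    show ?thesis
    proof (cases "t \<in> S")
      case True
      have "t \<in> blk n S t" "Suc t \<in> blk n S t" using t True by (auto simp: blk_def conn_sym conn_Suc)
      moreover have "blk n S t \<union> (\<lambda>x. x + n) ` blk n S t \<in> bpart n S" using t unfolding bpart_def by blast
      ultimately have "(t, Suc t) \<in> r" unfolding r_def rel_of_def by blast
      then show ?thesis by blast
    next
      case False
      then have tT: "t \<in> T" using that U_def by blast
      have "t \<in> blk n T t" "Suc t \<in> blk n T t" using t tT by (auto simp: blk_def conn_sym conn_Suc)
      then have "t + n \<in> (\<lambda>x. x + n) ` blk n T t" "Suc t + n \<in> (\<lambda>x. x + n) ` blk n T t" by auto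
      moreover have "(\<lambda>x. x + n) ` blk n T t \<union> (\<lambda>x. x + 2*n) ` blk n T t \<in> J'" using t unfolding J'_eq by blast
      ultimately have "(t + n, Suc t + n) \<in> r" unfolding r_def rel_of_def by blast
      moreover have "(t, t + n) \<in> r" "(Suc t + n, Suc t) \<in> r" using inS(1)[OF t(1)] inS(2)[OF t(2)] by auto
      ultimately show ?thesis by (meson converse_rtrancl_into_rtrancl r_into_rtrancl)
    qed
  qed
  have cen: "\<forall>B\<in>?P. \<exists>c\<in>B. \<forall>x\<in>B. (c, x) \<in> r\<^sup>+"
  proof
    fix B assume "B \<in> ?P"
    then obtain k where k: "k \<in> {1..n}" "B = Tr k" by blast
    have "(k, x) \<in> r\<^sup>+" if x: "x \<in> Tr k" for x
    proof -
      obtain a where a: "a \<in> blk n U k" "x = a \<or> x = a + n \<or> x = a + 2*n" using trm[OF x] by blast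
      have a1: "a \<in> {1..n}" using bs[OF a(1)] by simp
      have "conn U k a" using a(1) by (simp add: blk_def conn_sym)
      then have ka: "(k, a) \<in> r\<^sup>*" using walk[OF steps symr] by blast
      have "(k, a) \<in> r\<^sup>+" using ka inS(3)[OF a1] by (meson rtrancl_into_trancl1)
      moreover have "(k, a + n) \<in> r\<^sup>+" using ka inS(1)[OF a1] by (meson rtrancl_into_trancl1)
      moreover have "(k, a + 2*n) \<in> r\<^sup>+" using \<open>(k, a + n) \<in> r\<^sup>+\<close> inT[OF a1] by (meson trancl_into_trancl)
      ultimately show ?thesis using a(2) by blast
    qed
    moreover have "k \<in> Tr k" using blk_self[OF k(1)] by (simp add: Tr_def)
    ultimately show "\<exists>c\<in>B. \<forall>x\<in>B. (c, x) \<in> r\<^sup>+" using k by blast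
  qed
  have "pmult n (bpart n S) (bpart n T) =
     {(\<lambda>x. if x > 2*n then x - n else x) ` (C - {n+1..2*n}) | C. C \<in> ?P \<and> C - {n+1..2*n} \<noteq> {}}"
    by (rule pmult_calc[OF P sub[unfolded r_def J'_def] cen[unfolded r_def J'_def]])
  also have "\<dots> = (\<lambda>k. (\<lambda>x. if x > 2*n then x - n else x) ` (Tr k - {n+1..2*n})) ` {1..n}"
  proof (rule setcompr_img)
    fix k assume "k \<in> {1..n}"
    then have "k \<in> Tr k - {n+1..2*n}" using blk_self[of k n U] by (auto simp: Tr_def)
    then show "Tr k - {n+1..2*n} \<noteq> {}" by blast
  qed
  also have "\<dots> = bpart n (S \<union> T)"
    unfolding bpart_def U_def[symmetric]
  proof (rule image_cong[OF HOL.refl])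
    fix k assume k: "k \<in> {1..n}"
    have "Tr k - {n+1..2*n} = blk n U k \<union> (\<lambda>x. x + 2*n) ` blk n U k"
      using bs[of _ U k] unfolding Tr_def by fastforce
    moreover have "(\<lambda>x. if x > 2*n then x - n else x) ` (blk n U k \<union> (\<lambda>x. x + 2*n) ` blk n U k)
        = blk n U k \<union> (\<lambda>x. x + n) ` blk n U k"
    proof -
      have e1: "(\<lambda>x. if x > 2*n then x - n else x) ` blk n U k = (\<lambda>x. x) ` blk n U k"
        by (rule image_cong[OF HOL.refl]) (use bs in fastforce)
      have e2: "(\<lambda>x. if x > 2*n then x - n else x) ` (\<lambda>x. x + 2*n) ` blk n U k = (\<lambda>x. x + n) ` blk n U k"
        unfolding image_image by (rule image_cong[OF HOL.refl]) (use bs in fastforce)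
      show ?thesis unfolding image_Un e1 e2 by simp
    qed
    ultimately show "(\<lambda>x. if x > 2*n then x - n else x) ` (Tr k - {n+1..2*n}) = blk n U k \<union> (\<lambda>x. x + n) ` blk n U k"
      by simp
  qed
  finally show ?thesis .
qed




lemma valid_iff: "set w \<subseteq> gens n \<longleftrightarrow> idx_of w \<subseteq> {1..<n}"
proof (induction w)
  case (Cons g w) then show ?case by (cases g) (auto simp: gens_def)
qed simp

lemma one_perm: "one_p n = perm_part n id"
  unfolding one_p_def perm_part_def by (auto simp: Setcompr_eq_image)

lemma sp_perm: "s_p n i = perm_part n (sw i)"
  by (simp only: s_p_def perm_part_def sw_def Setcompr_eq_image)

lemma conn_lo: "conn S a k \<Longrightarrow> min a k < max a k \<Longrightarrow> min a k \<in> S"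
  unfolding conn_def by blast

lemma conn_lo1: "conn S a k \<Longrightarrow> Suc (min a k) < max a k \<Longrightarrow> Suc (min a k) \<in> S"
  unfolding conn_def by simp

lemma conn_empty: "conn {} a k \<longleftrightarrow> a = k"
proof
  assume c: "conn {} a k"
  show "a = k"
  proof (rule ccontr)
    assume "a \<noteq> k"
    then have "min a k < max a k" by (simp add: min_def max_def)
    then show False using conn_lo[OF c] by simp
  qed
qed simp

lemma blk_empty: "k \<in> {1..n} \<Longrightarrow> blk n {} k = {k}"
  unfolding blk_def conn_empty by auto

lemma bpart_empty: "bpart n {} = perm_part n id"
  unfolding bpart_def perm_part_def
  by (rule image_cong[OF HOL.refl]) (simp add: blk_empty add.commute insert_commute)

lemma conn_single: "conn {i} a k \<longleftrightarrow> a = k \<or> (a = i \<and> k = Suc i) \<or> (k = i \<and> a = Suc i)"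
proof
  assume c: "conn {i} a k"
  show "a = k \<or> (a = i \<and> k = Suc i) \<or> (k = i \<and> a = Suc i)"
  proof (rule ccontr)
    assume h: "\<not> ?thesis"
    have 1: "min a k < max a k" using h by (auto simp: min_def max_def)
    have 2: "min a k = i" using conn_lo[OF c 1] by simp
    have 3: "\<not> Suc (min a k) < max a k" using conn_lo1[OF c] 2 by auto
    show False using h 1 2 3 by (auto simp: min_def max_def split: if_splits)
  qed
next
  assume "a = k \<or> (a = i \<and> k = Suc i) \<or> (k = i \<and> a = Suc i)"
  then show "conn {i} a k" using conn_Suc[of "{i}" i] by (auto simp: conn_sym)
qed

lemma bp_bpart:
  assumes i: "1 \<le> i" "i < n"
  shows "b_p n i = bpart n {i}"
proof -
  have bk: "blk n {i} k = (if k = i \<or> k = Suc i then {i, Suc i} else {k})" if "k \<in> {1..n}" for k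
    using that i unfolding blk_def conn_single by auto
  have "bpart n {i} = (\<lambda>k. if k = i \<or> k = Suc i then {i, Suc i, n + i, n + Suc i} else {k, n + k}) ` {1..n}"
    unfolding bpart_def by (rule image_cong[OF HOL.refl]) (auto simp: bk)
  also have "\<dots> = b_p n i"
  proof
    show "(\<lambda>k. if k = i \<or> k = Suc i then {i, Suc i, n + i, n + Suc i} else {k, n + k}) ` {1..n} \<subseteq> b_p n i"
    proof
      fix B assume "B \<in> (\<lambda>k. if k = i \<or> k = Suc i then {i, Suc i, n + i, n + Suc i} else {k, n + k}) ` {1..n}"
      then obtain k where k: "k \<in> {1..n}" "B = (if k = i \<or> k = Suc i then {i, Suc i, n + i, n + Suc i} else {k, n + k})" by blast
      show "B \<in> b_p n i"
      proof (cases "k = i \<or> k = Suc i")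
        case True then show ?thesis using k unfolding b_p_def by auto
      next
        case False
        then have "{k, n + k} \<noteq> {i, n + i}" "{k, n + k} \<noteq> {i + 1, n + i + 1}" using k i by (auto simp: doubleton_eq_iff)
        then show ?thesis using k False unfolding b_p_def one_p_def by auto
      qed
    qed
    show "b_p n i \<subseteq> (\<lambda>k. if k = i \<or> k = Suc i then {i, Suc i, n + i, n + Suc i} else {k, n + k}) ` {1..n}"
    proof
      fix B assume "B \<in> b_p n i"
      then consider "B = {i, i+1, n+i, n+i+1}" | k where "k \<in> {1..n}" "B = {k, n+k}" "B \<noteq> {i, n+i}" "B \<noteq> {i+1, n+i+1}"
        unfolding b_p_def one_p_def by blast
      then show "B \<in> (\<lambda>k. if k = i \<or> k = Suc i then {i, Suc i, n + i, n + Suc i} else {k, n + k}) ` {1..n}"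
      proof cases
        case 1 then show ?thesis using i by (auto intro!: image_eqI[of _ _ i])
      next
        case (2 k)
        then have "k \<noteq> i" "k \<noteq> Suc i" by auto
        then show ?thesis using 2 by (auto intro!: image_eqI[of _ _ k])
      qed
    qed
  qed
  finally show ?thesis ..
qed

lemma permn_sw: "1 \<le> i \<Longrightarrow> i < n \<Longrightarrow> permn n (sw i)"
  unfolding permn_def using bij_sw by (auto simp: sw_def)

lemma permn_id: "permn n id"
  unfolding permn_def by simp

lemma permn_perm: "set w \<subseteq> gens n \<Longrightarrow> permn n (perm_of w)"
  unfolding permn_def valid_iff using bij_perm by (auto intro!: perm_fix)

lemma eval_Phi: "set w \<subseteq> gens n \<Longrightarrow> eval_word n w = (perm_part n (perm_of w), bpart n (idx_of w))"
proof (induction w)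
  case Nil then show ?case by (simp add: one_perm bpart_empty id_def)
next
  case (Cons g w)
  have w: "set w \<subseteq> gens n" using Cons.prems by simp
  have Sv: "idx_of w \<subseteq> {1..<n}" using w valid_iff by blast
  show ?case
  proof (cases g)
    case (E i)
    then have i: "1 \<le> i" "i < n" using Cons.prems by (auto simp: gens_def)
    have "eval_word n (g # w) = (pmult n (perm_part n id) (perm_part n (perm_of w)), pmult n (bpart n {i}) (bpart n (idx_of w)))"
      using E Cons.IH[OF w] by (simp add: bmult_def one_perm bp_bpart[OF i])
    also have "\<dots> = (perm_part n (perm_of w), bpart n (insert i (idx_of w)))"
      using perm_mult[OF permn_id permn_perm[OF w]] bpart_mult[of "{i}" n "idx_of w"] i Sv by simp
    finally show ?thesis using E by simp
  next
    case (Z i)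
    then have i: "1 \<le> i" "i < n" using Cons.prems by (auto simp: gens_def)
    have "eval_word n (g # w) = (pmult n (perm_part n (sw i)) (perm_part n (perm_of w)), pmult n (bpart n {i}) (bpart n (idx_of w)))"
      using Z Cons.IH[OF w] by (simp add: bmult_def sp_perm bp_bpart[OF i])
    also have "\<dots> = (perm_part n (perm_of w \<circ> sw i), bpart n (insert i (idx_of w)))"
      using perm_mult[OF permn_sw[OF i] permn_perm[OF w]] bpart_mult[of "{i}" n "idx_of w"] i Sv by simp
    finally show ?thesis using Z by (simp add: comp_def)
  qed
qed




lemma rels_props: "(l, r) \<in> rels n \<Longrightarrow> perm_of l = perm_of r \<and> idx_of l = idx_of r"
  unfolding rels_def by (auto simp: fun_eq_iff sw_def)

lemma wcong_inv: "wcong (rels n) u v \<Longrightarrow> perm_of u = perm_of v \<and> idx_of u = idx_of v"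
proof (induction rule: wcong.induct)
  case (rel l r u v) then show ?case using rels_props[OF rel.hyps] by simp
qed auto

lemma perm_part_inj:
  assumes s: "permn n \<sigma>" and t: "permn n \<tau>" and eq: "perm_part n \<sigma> = perm_part n \<tau>"
  shows "\<sigma> = \<tau>"
proof
  fix k show "\<sigma> k = \<tau> k"
  proof (cases "k \<in> {1..n}")
    case False then show ?thesis using s t by (simp add: permn_def)
  next
    case True
    then have "{k, n + \<sigma> k} \<in> perm_part n \<tau>" using eq unfolding perm_part_def by blast
    then obtain k' where k': "k' \<in> {1..n}" "{k, n + \<sigma> k} = {k', n + \<tau> k'}" unfolding perm_part_def by blast
    have "\<tau> k' \<in> {1..n}" "\<sigma> k \<in> {1..n}" using permn_in[OF t k'(1)] permn_in[OF s True] by auto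
    then have "k = k' \<and> \<sigma> k = \<tau> k'" using k'(2) True by (auto simp: doubleton_eq_iff)
    then show ?thesis by blast
  qed
qed

lemma bpart_adj:
  assumes "1 \<le> i" "Suc i \<le> n"
  shows "(\<exists>B\<in>bpart n S. i \<in> B \<and> Suc i \<in> B) \<longleftrightarrow> i \<in> S"
proof
  assume "\<exists>B\<in>bpart n S. i \<in> B \<and> Suc i \<in> B"
  then obtain k where k: "k \<in> {1..n}" "i \<in> blk n S k \<union> (\<lambda>x. x + n) ` blk n S k" "Suc i \<in> blk n S k \<union> (\<lambda>x. x + n) ` blk n S k"
    unfolding bpart_def by blast
  have big: "x \<in> (\<lambda>x. x + n) ` blk n S k \<Longrightarrow> n < x" for x by (auto simp: blk_def)
  have "i \<in> blk n S k" "Suc i \<in> blk n S k" using k(2,3) assms big by fastforce+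
  then have "conn S i k" "conn S (Suc i) k" by (auto simp: blk_def)
  then have "conn S i (Suc i)" using conn_trans conn_sym by blast
  then show "i \<in> S" by (simp add: conn_Suc)
next
  assume "i \<in> S"
  then have "i \<in> blk n S i" "Suc i \<in> blk n S i" using assms by (auto simp: blk_def conn_sym conn_Suc)
  moreover have "blk n S i \<union> (\<lambda>x. x + n) ` blk n S i \<in> bpart n S" using assms unfolding bpart_def by auto
  ultimately show "\<exists>B\<in>bpart n S. i \<in> B \<and> Suc i \<in> B" by blast
qed

lemma bpart_inj:
  assumes "S \<subseteq> {1..<n}" "T \<subseteq> {1..<n}" "bpart n S = bpart n T"
  shows "S = T"
proof -
  have "i \<in> S \<longleftrightarrow> i \<in> T" if "1 \<le> i" "Suc i \<le> n" for i
    using bpart_adj[OF that, of S] bpart_adj[OF that, of T] assms(3) by simp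
  then show ?thesis using assms(1,2) by (auto simp: subset_iff)
qed

lemma conn_word: "conn (idx_of w) k (perm_of w k)"
proof (induction w arbitrary: k)
  case Nil then show ?case by simp
next
  case (Cons g w)
  show ?case
  proof (cases g)
    case (E i) then show ?thesis using Cons conn_mono[of "idx_of w" "insert i (idx_of w)"] by auto
  next
    case (Z i)
    have 1: "conn (insert i (idx_of w)) k (sw i k)"
      by (auto simp: sw_def conn_Suc conn_sym)
    have 2: "conn (insert i (idx_of w)) (sw i k) (perm_of w (sw i k))"
      using Cons.IH conn_mono[of "idx_of w" "insert i (idx_of w)"] by blast
    show ?thesis using conn_trans[OF 1 2] Z by simp
  qed
qed

lemma perm_range: "\<forall>t\<in>idx_of w. a \<le> t \<and> Suc t \<le> b \<Longrightarrow> y \<in> {a..b} \<Longrightarrow> perm_of w y \<in> {a..b}"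
proof (induction w arbitrary: y)
  case Nil then show ?case by simp
next
  case (Cons g w)
  show ?case
  proof (cases g)
    case (E i) then show ?thesis using Cons by auto
  next
    case (Z i)
    have "sw i y \<in> {a..b}" using Cons.prems Z by (auto simp: sw_def)
    then show ?thesis using Cons Z by auto
  qed
qed

lemma conn_sub: "conn S a b \<Longrightarrow> a \<le> b \<Longrightarrow> y \<in> {a..b} \<Longrightarrow> y' \<in> {a..b} \<Longrightarrow> conn S y y'"
  unfolding conn_def by (auto simp: min_def max_def split: if_splits)

lemma word_gen:
  "bij \<sigma> \<Longrightarrow> (\<forall>x. x \<notin> {1..p} \<longrightarrow> \<sigma> x = x) \<Longrightarrow> (\<forall>k. conn S k (\<sigma> k)) \<Longrightarrow>
   \<exists>w. (\<forall>g\<in>set w. \<exists>k. g = Z k) \<and> idx_of w \<subseteq> S \<and> perm_of w = \<sigma>"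
proof (induction p arbitrary: \<sigma>)
  case 0
  then have "\<sigma> = id" by auto
  then show ?case by (intro exI[of _ "[]"]) simp
next
  case (Suc q)
  obtain j where j: "\<sigma> j = Suc q" using Suc.prems(1) by (metis bij_pointE)
  have j1: "1 \<le> j" "j \<le> Suc q"
  proof -
    have "j \<in> {1..Suc q}"
    proof (rule ccontr)
      assume "j \<notin> {1..Suc q}"
      then have "\<sigma> j = j" using Suc.prems(2) by blast
      then show False using j \<open>j \<notin> {1..Suc q}\<close> by simp
    qed
    then show "1 \<le> j" "j \<le> Suc q" by auto
  qed
  define c where "c = perm_of (cyc j q)"
  have cj: "c j = Suc q" unfolding c_def using perm_cyc[OF j1(2)] .
  have bc: "bij c" unfolding c_def by (rule bij_perm)
  have cjq: "conn S j (Suc q)" using Suc.prems(3) j by metis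
  have crange: "y \<in> {j..Suc q} \<Longrightarrow> c y \<in> {j..Suc q}" for y
    unfolding c_def by (rule perm_range) auto
  have cfix: "y \<notin> {j..Suc q} \<Longrightarrow> c y = y" for y
    unfolding c_def by (rule perm_fix) auto
  have hc: "conn S y (c y)" for y
  proof (cases "y \<in> {j..Suc q}")
    case True show ?thesis using conn_sub[OF cjq j1(2) True crange[OF True]] .
  next
    case False then show ?thesis using cfix by simp
  qed
  define \<sigma>' where "\<sigma>' = \<sigma> \<circ> inv c"
  have ic: "c (inv c k) = k" for k using bc by (meson bij_inv_eq_iff)
  have ic2: "inv c (c k) = k" for k using bc by (simp add: bij_is_inj)
  have b': "bij \<sigma>'" unfolding \<sigma>'_def using Suc.prems(1) bc by (intro bij_comp bij_imp_bij_inv)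
  have f': "\<forall>x. x \<notin> {1..q} \<longrightarrow> \<sigma>' x = x"
  proof (intro allI impI)
    fix x assume x: "x \<notin> {1..q}"
    show "\<sigma>' x = x"
    proof (cases "x = Suc q")
      case True
      then have "inv c x = j" using cj ic2 by metis
      then show ?thesis using True j by (simp add: \<sigma>'_def)
    next
      case False
      then have x2: "x \<notin> {1..Suc q}" "x \<notin> {j..Suc q}" using x j1 by auto
      then have "inv c x = x" using cfix ic2 by metis
      then show ?thesis using Suc.prems(2) x2 by (simp add: \<sigma>'_def)
    qed
  qed
  have c': "\<forall>k. conn S k (\<sigma>' k)"
  proof
    fix k
    have "conn S (inv c k) k" using hc[of "inv c k"] ic by simp
    moreover have "conn S (inv c k) (\<sigma> (inv c k))" using Suc.prems(3) by blast
    ultimately show "conn S k (\<sigma>' k)" unfolding \<sigma>'_def using conn_sym conn_trans by (metis comp_apply)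
  qed
  obtain w' where w': "\<forall>g\<in>set w'. \<exists>k. g = Z k" "idx_of w' \<subseteq> S" "perm_of w' = \<sigma>'"
    using Suc.IH[OF b' f' c'] by blast
  have "{j..q} \<subseteq> S" using cjq j1 unfolding conn_def by auto
  moreover have "perm_of (cyc j q @ w') = \<sigma>"
  proof
    fix x
    have "perm_of (cyc j q @ w') x = \<sigma>' (c x)" using w'(3) by (simp add: c_def)
    also have "\<dots> = \<sigma> x" by (simp add: \<sigma>'_def ic2)
    finally show "perm_of (cyc j q @ w') x = \<sigma> x" .
  qed
  moreover have "\<forall>g\<in>set (cyc j q @ w'). \<exists>k. g = Z k" using w'(1) by (auto simp: cyc_def)
  ultimately show ?case using w'(2) by (intro exI[of _ "cyc j q @ w'"]) auto
qed

lemma word_exists: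
  assumes "permn n \<sigma>" "S \<subseteq> {1..<n}" "\<forall>k. conn S k (\<sigma> k)"
  shows "\<exists>w. set w \<subseteq> gens n \<and> perm_of w = \<sigma> \<and> idx_of w = S"
proof -
  obtain w0 where w0: "idx_of w0 \<subseteq> S" "perm_of w0 = \<sigma>"
    using word_gen[of \<sigma> n S] assms unfolding permn_def by blast
  have fS: "finite S" using assms(2) finite_subset by blast
  define w where "w = map E (sorted_list_of_set S) @ w0"
  have "idx_of w = S" using w0 fS by (auto simp: w_def)
  moreover have "perm_of w = \<sigma>" using w0 by (simp add: w_def)
  ultimately show ?thesis using assms(2) valid_iff by blast
qed




lemma part_uniq: "partition_on A P \<Longrightarrow> B \<in> P \<Longrightarrow> B' \<in> P \<Longrightarrow> x \<in> B \<Longrightarrow> x \<in> B' \<Longrightarrow> B = B'"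
  by (metis disjnt_iff pairwiseD partition_onD2)

lemma conn_between: "conn S x k \<Longrightarrow> conn S z k \<Longrightarrow> x \<le> y \<Longrightarrow> y \<le> z \<Longrightarrow> conn S y k"
  unfolding conn_def
proof (intro allI impI)
  fix t assume h: "\<forall>t. min x k \<le> t \<and> t < max x k \<longrightarrow> t \<in> S" "\<forall>t. min z k \<le> t \<and> t < max z k \<longrightarrow> t \<in> S"
    "x \<le> y" "y \<le> z" "min y k \<le> t \<and> t < max y k"
  have "(min x k \<le> t \<and> t < max x k) \<or> (min z k \<le> t \<and> t < max z k)"
  proof (cases "y \<le> k")
    case True
    then have "min x k \<le> t \<and> t < max x k" using h(3-5) by (simp add: min_def max_def)
    then show ?thesis ..
  next
    case False
    then have "min z k \<le> t \<and> t < max z k" using h(3-5) by (simp add: min_def max_def)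
    then show ?thesis ..
  qed
  then show "t \<in> S" using h(1,2) by blast
qed

lemma blk_interval:
  assumes "k \<in> {1..n}"
  shows "\<exists>a b. blk n S k = {a..b}"
proof -
  have fin: "finite (blk n S k)" using blk_sub[of n S k] by (rule finite_subset) simp
  have ne: "blk n S k \<noteq> {}" using blk_self[OF assms] by blast
  have "blk n S k = {Min (blk n S k)..Max (blk n S k)}"
  proof
    show "blk n S k \<subseteq> {Min (blk n S k)..Max (blk n S k)}" using fin by auto
    show "{Min (blk n S k)..Max (blk n S k)} \<subseteq> blk n S k"
    proof
      fix y assume y: "y \<in> {Min (blk n S k)..Max (blk n S k)}"
      have mi: "Min (blk n S k) \<in> blk n S k" "Max (blk n S k) \<in> blk n S k" using fin ne by auto
      have c1: "conn S (Min (blk n S k)) k" using mi(1) by (simp add: blk_def)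
      have c2: "conn S (Max (blk n S k)) k" using mi(2) by (simp add: blk_def)
      have r1: "1 \<le> Min (blk n S k)" using mi(1) by (simp add: blk_def)
      have r2: "Max (blk n S k) \<le> n" using mi(2) by (simp add: blk_def)
      have y1: "Min (blk n S k) \<le> y" "y \<le> Max (blk n S k)" using y by auto
      have "conn S y k" by (rule conn_between[OF c1 c2 y1])
      moreover have "y \<in> {1..n}" using y1 r1 r2 by simp
      ultimately show "y \<in> blk n S k" unfolding blk_def by blast
    qed
  qed
  then show ?thesis by blast
qed

lemma blk_perm:
  assumes s: "permn n \<sigma>" and c: "\<forall>k. conn S k (\<sigma> k)"
  shows "\<sigma> ` blk n S k = blk n S k"
proof
  show "\<sigma> ` blk n S k \<subseteq> blk n S k"
  proof
    fix y assume "y \<in> \<sigma> ` blk n S k"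
    then obtain a where a: "a \<in> blk n S k" "y = \<sigma> a" by blast
    have "a \<in> {1..n}" "conn S a k" using a by (auto simp: blk_def)
    moreover have "conn S a (\<sigma> a)" using c by blast
    ultimately have "conn S (\<sigma> a) k" "\<sigma> a \<in> {1..n}" using permn_in[OF s] conn_sym[of S a "\<sigma> a"] conn_trans[of S "\<sigma> a" a k] by auto
    then show "y \<in> blk n S k" using a(2) unfolding blk_def by blast
  qed
  show "blk n S k \<subseteq> \<sigma> ` blk n S k"
  proof
    fix b assume b: "b \<in> blk n S k"
    then have b1: "b \<in> {1..n}" "conn S b k" by (auto simp: blk_def)
    obtain a where a: "a \<in> {1..n}" "\<sigma> a = b" using permn_surj[OF s b1(1)] by blast
    have "conn S a b" using c a(2) by blast
    then have "conn S a k" using b1(2) conn_trans by blast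
    then have "a \<in> blk n S k" using a(1) unfolding blk_def by blast
    then show "b \<in> \<sigma> ` blk n S k" using a(2) by blast
  qed
qed

lemma perm_part_pmon:
  assumes s: "permn n \<sigma>"
  shows "perm_part n \<sigma> \<in> pmon n"
  unfolding pmon_def perm_part_def mem_Collect_eq
proof (rule partition_family)
  show "{k, n + \<sigma> k} \<noteq> {}" for k by simp
  show "(\<Union>k\<in>{1..n}. {k, n + \<sigma> k}) = {1..2*n}"
  proof
    show "(\<Union>k\<in>{1..n}. {k, n + \<sigma> k}) \<subseteq> {1..2*n}" using permn_in[OF s] by fastforce
    show "{1..2*n} \<subseteq> (\<Union>k\<in>{1..n}. {k, n + \<sigma> k})"
    proof
      fix x assume x: "x \<in> {1..2*n}"
      show "x \<in> (\<Union>k\<in>{1..n}. {k, n + \<sigma> k})"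
      proof (cases "x \<le> n")
        case True then show ?thesis using x by auto
      next
        case False
        then obtain k where "k \<in> {1..n}" "\<sigma> k = x - n" using permn_surj[OF s, of "x - n"] x by force
        then show ?thesis using False by force
      qed
    qed
  qed
  fix k k' assume k: "k \<in> {1..n}" "k' \<in> {1..n}" "{k, n + \<sigma> k} \<inter> {k', n + \<sigma> k'} \<noteq> {}"
  have "\<sigma> k \<in> {1..n}" "\<sigma> k' \<in> {1..n}" using permn_in[OF s] k by auto
  then have "k = k' \<or> \<sigma> k = \<sigma> k'" using k by auto
  then have "k = k'" using permn_inj[OF s] by blast
  then show "{k, n + \<sigma> k} = {k', n + \<sigma> k'}" by simp
qed

lemma bpart_pmon: "bpart n S \<in> pmon n"
  unfolding pmon_def bpart_def mem_Collect_eq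
proof (rule partition_family)
  have bs: "a \<in> blk n V k \<Longrightarrow> 1 \<le> a \<and> a \<le> n" for a V k by (simp add: blk_def)
  show "blk n S k \<union> (\<lambda>x. x + n) ` blk n S k \<noteq> {}" if "k \<in> {1..n}" for k using blk_self[OF that] by blast
  show "(\<Union>k\<in>{1..n}. blk n S k \<union> (\<lambda>x. x + n) ` blk n S k) = {1..2*n}"
  proof
    show "(\<Union>k\<in>{1..n}. blk n S k \<union> (\<lambda>x. x + n) ` blk n S k) \<subseteq> {1..2*n}" using bs by fastforce
    show "{1..2*n} \<subseteq> (\<Union>k\<in>{1..n}. blk n S k \<union> (\<lambda>x. x + n) ` blk n S k)"
    proof
      fix x assume x: "x \<in> {1..2*n}"
      show "x \<in> (\<Union>k\<in>{1..n}. blk n S k \<union> (\<lambda>x. x + n) ` blk n S k)"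
      proof (cases "x \<le> n")
        case True then show ?thesis using x blk_self[of x n S] by auto
      next
        case False
        then have xn: "x - n \<in> {1..n}" using x by auto
        then have "x - n \<in> blk n S (x - n)" by (rule blk_self)
        then have "x - n + n \<in> (\<lambda>x. x + n) ` blk n S (x - n)" by blast
        moreover have "x - n + n = x" using False by simp
        ultimately show ?thesis using xn by auto
      qed
    qed
  qed
  fix k k' assume k: "k \<in> {1..n}" "k' \<in> {1..n}"
    "(blk n S k \<union> (\<lambda>x. x + n) ` blk n S k) \<inter> (blk n S k' \<union> (\<lambda>x. x + n) ` blk n S k') \<noteq> {}"
  then obtain z where z: "z \<in> blk n S k \<union> (\<lambda>x. x + n) ` blk n S k" "z \<in> blk n S k' \<union> (\<lambda>x. x + n) ` blk n S k'" by blast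
  have "blk n S k \<inter> blk n S k' \<noteq> {}"
  proof (cases "z \<le> n")
    case True
    then have "z \<in> blk n S k" "z \<in> blk n S k'" using z bs by fastforce+
    then show ?thesis by blast
  next
    case False
    then have "z - n \<in> blk n S k" "z - n \<in> blk n S k'" using z bs by fastforce+
    then show ?thesis by blast
  qed
  then have "blk n S k = blk n S k'" by (rule blk_meet)
  then show "blk n S k \<union> (\<lambda>x. x + n) ` blk n S k = blk n S k' \<union> (\<lambda>x. x + n) ` blk n S k'" by simp
qed

lemma BR_sup:
  assumes s: "permn n \<sigma>" and S: "S \<subseteq> {1..<n}" and c: "\<forall>k. conn S k (\<sigma> k)"
  shows "(perm_part n \<sigma>, bpart n S) \<in> BR n"
proof -
  have bs: "a \<in> blk n V k \<Longrightarrow> 1 \<le> a \<and> a \<le> n" for a V k by (simp add: blk_def)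
  have sym: "perm_part n \<sigma> \<in> sym_part n"
    unfolding sym_part_def using perm_part_pmon[OF s] permn_in[OF s] unfolding perm_part_def by blast
  have r1: "refines (one_p n) (bpart n S)"
    unfolding refines_def
  proof
    fix B assume "B \<in> bpart n S"
    then obtain k where k: "B = blk n S k \<union> (\<lambda>x. x + n) ` blk n S k" unfolding bpart_def by blast
    have "(\<lambda>a. {a, n + a}) ` blk n S k \<subseteq> one_p n" unfolding one_p_def using bs by fastforce
    moreover have "B = \<Union>((\<lambda>a. {a, n + a}) ` blk n S k)" using k by auto
    ultimately show "\<exists>X\<subseteq>one_p n. B = \<Union>X" by blast
  qed
  have lin: "linear_part (restrict_part (bpart n S) {1..n})"
    unfolding linear_part_def restrict_part_def
  proof (intro ballI)
    fix A assume "A \<in> {B \<inter> {1..n} |B. B \<in> bpart n S \<and> B \<inter> {1..n} \<noteq> {}}"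
    then obtain k where k: "k \<in> {1..n}" "A = (blk n S k \<union> (\<lambda>x. x + n) ` blk n S k) \<inter> {1..n}"
      unfolding bpart_def by blast
    have "A = blk n S k" using k(2) bs by fastforce
    then show "\<exists>a b. A = {a..b}" using blk_interval[OF k(1)] by simp
  qed
  have r2: "refines (perm_part n \<sigma>) (bpart n S)"
    unfolding refines_def
  proof
    fix B assume "B \<in> bpart n S"
    then obtain k where k: "B = blk n S k \<union> (\<lambda>x. x + n) ` blk n S k" unfolding bpart_def by blast
    have "(\<lambda>a. {a, n + \<sigma> a}) ` blk n S k \<subseteq> perm_part n \<sigma>" unfolding perm_part_def using blk_sub by (rule image_mono)
    moreover have "B = \<Union>((\<lambda>a. {a, n + \<sigma> a}) ` blk n S k)"
    proof -
      have "\<Union>((\<lambda>a. {a, n + \<sigma> a}) ` blk n S k) = blk n S k \<union> (\<lambda>x. x + n) ` (\<sigma> ` blk n S k)" by auto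
      then show ?thesis using k blk_perm[OF s c] by simp
    qed
    ultimately show "\<exists>X\<subseteq>perm_part n \<sigma>. B = \<Union>X" by blast
  qed
  show ?thesis unfolding BR_def boxed_def using sym r1 r2 lin bpart_pmon by blast
qed

lemma sym_part_perm:
  assumes "I \<in> sym_part n"
  shows "\<exists>\<sigma>. permn n \<sigma> \<and> I = perm_part n \<sigma>"
proof -
  have P: "partition_on {1..2*n} I" and F: "\<forall>B\<in>I. \<exists>i j. i \<in> {1..n} \<and> j \<in> {1..n} \<and> B = {i, n+j}"
    using assms by (auto simp: sym_part_def pmon_def)
  have ex: "\<exists>j. j \<in> {1..n} \<and> {k, n+j} \<in> I" if k: "k \<in> {1..n}" for k
  proof -
    have "k \<in> \<Union>I" using partition_onD1[OF P] k by auto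
    then obtain B where B: "B \<in> I" "k \<in> B" by blast
    then obtain i j where ij: "i \<in> {1..n}" "j \<in> {1..n}" "B = {i, n+j}" using F by blast
    then have "k = i" using B(2) k by auto
    then show ?thesis using ij B by blast
  qed
  have un: "j = j'" if "k \<in> {1..n}" "j \<in> {1..n}" "j' \<in> {1..n}" "{k, n+j} \<in> I" "{k, n+j'} \<in> I" for k j j'
  proof -
    have "{k, n+j} = {k, n+j'}" using part_uniq[OF P that(4,5)] by blast
    then show ?thesis using that(1-3) by (auto simp: doubleton_eq_iff)
  qed
  define \<sigma> where "\<sigma> k = (if k \<in> {1..n} then (SOME j. j \<in> {1..n} \<and> {k, n+j} \<in> I) else k)" for k
  have sk: "\<sigma> k \<in> {1..n} \<and> {k, n + \<sigma> k} \<in> I" if "k \<in> {1..n}" for k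
    using someI_ex[OF ex[OF that]] that by (simp add: \<sigma>_def)
  have eq: "I = perm_part n \<sigma>"
  proof
    show "I \<subseteq> perm_part n \<sigma>"
    proof
      fix B assume B: "B \<in> I"
      then obtain i j where ij: "i \<in> {1..n}" "j \<in> {1..n}" "B = {i, n+j}" using F by blast
      have "\<sigma> i = j" using un[OF ij(1) _ ij(2)] sk[OF ij(1)] B ij(3) by blast
      then show "B \<in> perm_part n \<sigma>" using ij unfolding perm_part_def by blast
    qed
    show "perm_part n \<sigma> \<subseteq> I" using sk unfolding perm_part_def by blast
  qed
  have inj: "inj \<sigma>"
  proof (rule injI)
    fix a b assume ab: "\<sigma> a = \<sigma> b"
    show "a = b"
    proof (cases "a \<in> {1..n}"; cases "b \<in> {1..n}")
      assume a: "a \<in> {1..n}" and b: "b \<in> {1..n}"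
      have "{a, n + \<sigma> a} = {b, n + \<sigma> b}" using part_uniq[OF P sk[OF a, THEN conjunct2] sk[OF b, THEN conjunct2]] ab by auto
      then show ?thesis using a b sk[OF a] sk[OF b] by (auto simp: doubleton_eq_iff)
    next
      assume a: "a \<in> {1..n}" and b: "b \<notin> {1..n}"
      have "\<sigma> b = b" unfolding \<sigma>_def using b by (rule if_not_P)
      then show ?thesis using ab sk[OF a] b by simp
    next
      assume a: "a \<notin> {1..n}" and b: "b \<in> {1..n}"
      have "\<sigma> a = a" unfolding \<sigma>_def using a by (rule if_not_P)
      then show ?thesis using ab sk[OF b] a by simp
    next
      assume a: "a \<notin> {1..n}" and b: "b \<notin> {1..n}"
      have "\<sigma> a = a" unfolding \<sigma>_def using a by (rule if_not_P)
      moreover have "\<sigma> b = b" unfolding \<sigma>_def using b by (rule if_not_P)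
      ultimately show ?thesis using ab by metis
    qed
  qed
  have surj: "surj \<sigma>"
  proof -
    have "\<exists>x. y = \<sigma> x" for y
    proof (cases "y \<in> {1..n}")
      case False then have "\<sigma> y = y" unfolding \<sigma>_def by (rule if_not_P)
      then show ?thesis by (intro exI[of _ y]) simp
    next
      case True
      then have "n + y \<in> \<Union>I" using partition_onD1[OF P] by auto
      then obtain B where B: "B \<in> I" "n + y \<in> B" by blast
      then obtain i j where ij: "i \<in> {1..n}" "j \<in> {1..n}" "B = {i, n+j}" using F by blast
      then have "j = y" using B(2) True by auto
      then have "\<sigma> i = y" using un[OF ij(1) _ ij(2)] sk[OF ij(1)] B ij(3) by blast
      then show ?thesis by (intro exI[of _ i]) simp
    qed
    then show ?thesis by (auto simp: surj_def)
  qed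
  have "permn n \<sigma>" unfolding permn_def bij_def using inj surj by (simp add: \<sigma>_def)
  then show ?thesis using eq by blast
qed


lemma boxed_bpart:
  assumes "boxed n J"
  shows "\<exists>S. S \<subseteq> {1..<n} \<and> J = bpart n S"
proof -
  have P: "partition_on {1..2*n} J" and R: "refines (one_p n) J" and L: "linear_part (restrict_part J {1..n})"
    using assms by (auto simp: boxed_def pmon_def)
  define S where "S = {i. 1 \<le> i \<and> Suc i \<le> n \<and> (\<exists>B\<in>J. i \<in> B \<and> Suc i \<in> B)}"
  have Ssub: "S \<subseteq> {1..<n}" by (auto simp: S_def)
  have rng: "x \<in> {1..2*n}" if "B \<in> J" "x \<in> B" for B x
    using partition_onD1[OF P] that by blast
  have pair: "\<exists>a\<in>{1..n}. x \<in> {a, n + a} \<and> {a, n + a} \<subseteq> B" if h: "B \<in> J" "x \<in> B" for B x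
  proof -
    have "\<exists>X\<subseteq>one_p n. B = \<Union>X" using R h(1) unfolding refines_def by (rule bspec)
    then obtain X where X0: "X \<subseteq> one_p n \<and> B = \<Union>X" ..
    have X: "X \<subseteq> one_p n" "B = \<Union>X" using X0 by simp_all
    have "x \<in> \<Union>X" using h(2) X(2) by simp
    then obtain C where C: "C \<in> X" "x \<in> C" by (rule UnionE)
    have "C \<in> one_p n" using X(1) C(1) by (rule subsetD)
    then obtain a where a: "a \<in> {1..n}" "C = {a, n + a}" unfolding one_p_def by blast
    have "C \<subseteq> B" using Union_upper[OF C(1)] X(2) by simp
    then show ?thesis using a C(2) by blast
  qed
  have cl1: "n + x \<in> B" if h: "B \<in> J" "x \<in> B" "x \<le> n" for B x
  proof -
    obtain a where a: "a \<in> {1..n}" "x \<in> {a, n + a}" "{a, n + a} \<subseteq> B" using pair[OF h(1,2)] by blast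
    then have "x = a" using h(3) by auto
    then show ?thesis using a by auto
  qed
  have cl2: "x - n \<in> B \<and> x - n \<in> {1..n}" if h: "B \<in> J" "x \<in> B" "n < x" for B x
  proof -
    obtain a where a: "a \<in> {1..n}" "x \<in> {a, n + a}" "{a, n + a} \<subseteq> B" using pair[OF h(1,2)] by blast
    then have "x = n + a" using h(3) by auto
    then show ?thesis using a by auto
  qed
  have key: "B \<inter> {1..n} = blk n S k" if B: "B \<in> J" "k \<in> B" "k \<in> {1..n}" for B k
  proof -
    define A where "A = B \<inter> {1..n}"
    have "A \<in> restrict_part J {1..n}" unfolding A_def restrict_part_def using B by blast
    then obtain a b where ab: "A = {a..b}" using L unfolding linear_part_def by blast
    have kA: "k \<in> A" using B by (simp add: A_def)
    then have abk: "a \<le> k" "k \<le> b" using ab by auto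
    have "a \<in> A" "b \<in> A" using ab abk by auto
    then have a1: "1 \<le> a" "b \<le> n" unfolding A_def by auto
    show ?thesis
    proof
      show "B \<inter> {1..n} \<subseteq> blk n S k"
      proof
        fix x assume x: "x \<in> B \<inter> {1..n}"
        then have "x \<in> A" by (simp add: A_def)
        then have xab: "a \<le> x" "x \<le> b" using ab by auto
        have "conn S x k" unfolding conn_def
        proof (intro allI impI)
          fix t assume t: "min x k \<le> t \<and> t < max x k"
          then have "t \<in> A" "Suc t \<in> A" using xab abk ab by (auto simp: min_def max_def split: if_splits)
          then show "t \<in> S" unfolding S_def A_def using B(1) a1 by auto
        qed
        then show "x \<in> blk n S k" using x by (simp add: blk_def)
      qed
      show "blk n S k \<subseteq> B \<inter> {1..n}"
      proof
        fix x assume x: "x \<in> blk n S k"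
        then have x1: "x \<in> {1..n}" "conn S x k" by (auto simp: blk_def)
        show "x \<in> B \<inter> {1..n}"
        proof (rule ccontr)
          assume nx: "x \<notin> B \<inter> {1..n}"
          then have "x < a \<or> b < x" using x1(1) ab unfolding A_def by (metis atLeastAtMost_iff not_le)
          then show False
          proof
            assume xb: "b < x"
            have "min x k \<le> b \<and> b < max x k" using xb abk by (simp add: min_def max_def)
            then have "b \<in> S" using x1(2) unfolding conn_def by blast
            then obtain B' where B': "B' \<in> J" "b \<in> B'" "Suc b \<in> B'" "Suc b \<le> n" unfolding S_def by blast
            have "b \<in> B" using ab abk unfolding A_def by auto
            then have "B' = B" using part_uniq[OF P B'(1) B(1) B'(2)] by blast
            then have "Suc b \<in> A" using B' a1 unfolding A_def by auto
            then show False using ab by auto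
          next
            assume xa: "x < a"
            have "min x k \<le> a - 1 \<and> a - 1 < max x k" using xa abk by (auto simp: min_def max_def)
            then have "a - 1 \<in> S" using x1(2) unfolding conn_def by blast
            then obtain B' where B': "B' \<in> J" "a - 1 \<in> B'" "Suc (a - 1) \<in> B'" "1 \<le> a - 1" unfolding S_def by blast
            have "a \<in> B" using ab abk unfolding A_def by auto
            moreover have "Suc (a - 1) = a" using a1 by simp
            ultimately have "B' = B" using part_uniq[OF P B'(1) B(1)] B'(3) by auto
            then have "a - 1 \<in> A" using B' a1 abk unfolding A_def by auto
            then show False using ab a1 by auto
          qed
        qed
      qed
    qed
  qed
  have blockform: "B = blk n S k \<union> (\<lambda>x. x + n) ` blk n S k" if B: "B \<in> J" "k \<in> B" "k \<in> {1..n}" for B k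
  proof -
    have A: "B \<inter> {1..n} = blk n S k" using key[OF B] .
    show ?thesis
    proof
      show "B \<subseteq> blk n S k \<union> (\<lambda>x. x + n) ` blk n S k"
      proof
        fix x assume x: "x \<in> B"
        show "x \<in> blk n S k \<union> (\<lambda>x. x + n) ` blk n S k"
        proof (cases "x \<le> n")
          case True
          then have "x \<in> B \<inter> {1..n}" using x rng[OF B(1) x] by auto
          then show ?thesis using A by blast
        next
          case False
          then have "x - n \<in> B \<inter> {1..n}" using cl2[OF B(1) x] by auto
          then have "x - n \<in> blk n S k" using A by blast
          then have "x - n + n \<in> (\<lambda>x. x + n) ` blk n S k" by blast
          moreover have "x - n + n = x" using False by simp
          ultimately show ?thesis by simp
        qed
      qed
      show "blk n S k \<union> (\<lambda>x. x + n) ` blk n S k \<subseteq> B"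
      proof
        fix x assume "x \<in> blk n S k \<union> (\<lambda>x. x + n) ` blk n S k"
        then consider "x \<in> B \<inter> {1..n}" | y where "y \<in> B \<inter> {1..n}" "x = y + n" using A by blast
        then show "x \<in> B"
        proof cases
          case 1 then show ?thesis by blast
        next
          case (2 y) then show ?thesis using cl1[OF B(1), of y] by (simp add: add.commute)
        qed
      qed
    qed
  qed
  have "J = bpart n S"
  proof
    show "J \<subseteq> bpart n S"
    proof
      fix B assume B: "B \<in> J"
      then have "B \<noteq> {}" using partition_onD3[OF P] by blast
      then obtain x where x: "x \<in> B" by blast
      obtain k where k: "k \<in> B" "k \<in> {1..n}"
      proof (cases "x \<le> n")
        case True then show ?thesis using that x rng[OF B x] by auto
      next
        case False then show ?thesis using that cl2[OF B x] by auto
      qed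
      then show "B \<in> bpart n S" using blockform[OF B k] unfolding bpart_def by blast
    qed
    show "bpart n S \<subseteq> J"
    proof
      fix C assume "C \<in> bpart n S"
      then obtain k where k: "k \<in> {1..n}" "C = blk n S k \<union> (\<lambda>x. x + n) ` blk n S k" unfolding bpart_def by blast
      have "k \<in> \<Union>J" using partition_onD1[OF P] k(1) by auto
      then obtain B where B: "B \<in> J" "k \<in> B" by blast
      then show "C \<in> J" using blockform[OF B k(1)] k(2) by simp
    qed
  qed
  then show ?thesis using Ssub by blast
qed

lemma BR_sub:
  assumes "(I, J) \<in> BR n"
  shows "\<exists>\<sigma> S. permn n \<sigma> \<and> S \<subseteq> {1..<n} \<and> (\<forall>k. conn S k (\<sigma> k)) \<and> I = perm_part n \<sigma> \<and> J = bpart n S"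
proof -
  have I: "I \<in> sym_part n" and J: "boxed n J" and R: "refines I J" using assms by (auto simp: BR_def)
  obtain \<sigma> where s: "permn n \<sigma>" "I = perm_part n \<sigma>" using sym_part_perm[OF I] by blast
  obtain S where S: "S \<subseteq> {1..<n}" "J = bpart n S" using boxed_bpart[OF J] by blast
  have "conn S k (\<sigma> k)" for k
  proof (cases "k \<in> {1..n}")
    case False then show ?thesis using s(1) by (simp add: permn_def)
  next
    case True
    define Bk where "Bk = blk n S k \<union> (\<lambda>x. x + n) ` blk n S k"
    have BkJ: "Bk \<in> J" using S(2) True unfolding bpart_def Bk_def by blast
    have "\<exists>X\<subseteq>I. Bk = \<Union>X" using R BkJ unfolding refines_def by (rule bspec)
    then obtain X where X0: "X \<subseteq> I \<and> Bk = \<Union>X" ..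
    have X: "X \<subseteq> I" "Bk = \<Union>X" using X0 by simp_all
    have "k \<in> Bk" using blk_self[OF True] Bk_def by blast
    then obtain C where C: "C \<in> X" "k \<in> C" using X(2) by blast
    then obtain k' where k': "k' \<in> {1..n}" "C = {k', n + \<sigma> k'}" using X(1) s(2) unfolding perm_part_def by blast
    have "k = k'" using C(2) k' True permn_in[OF s(1) k'(1)] by auto
    then have "n + \<sigma> k \<in> Bk" using C k' X(2) by blast
    moreover have "\<sigma> k \<in> {1..n}" using permn_in[OF s(1) True] .
    ultimately have "\<sigma> k \<in> blk n S k" unfolding Bk_def blk_def by auto
    then show ?thesis by (simp add: blk_def conn_sym)
  qed
  then show ?thesis using s S by blast
qed


theorem theorem5p13:
  fixes n :: nat
  shows "eval_word n ` {w. set w \<subseteq> gens n} = BR n \<and>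
         (\<forall>u v. set u \<subseteq> gens n \<longrightarrow> set v \<subseteq> gens n \<longrightarrow>
            (eval_word n u = eval_word n v \<longleftrightarrow> wcong (rels n) u v))"
proof (intro conjI allI impI)
  show "eval_word n ` {w. set w \<subseteq> gens n} = BR n"
  proof
    show "eval_word n ` {w. set w \<subseteq> gens n} \<subseteq> BR n"
    proof
      fix x assume "x \<in> eval_word n ` {w. set w \<subseteq> gens n}"
      then obtain w where w1: "w \<in> {w. set w \<subseteq> gens n}" and w2: "x = eval_word n w" by (rule imageE)
      have w: "set w \<subseteq> gens n" using w1 by simp
      have iw: "idx_of w \<subseteq> {1..<n}" using w valid_iff by blast
      have "(perm_part n (perm_of w), bpart n (idx_of w)) \<in> BR n"
        by (rule BR_sup[OF permn_perm[OF w] iw]) (simp add: conn_word)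
      then show "x \<in> BR n" using w2 eval_Phi[OF w] by simp
    qed
    show "BR n \<subseteq> eval_word n ` {w. set w \<subseteq> gens n}"
    proof
      fix x assume x: "x \<in> BR n"
      obtain I J where IJ: "x = (I, J)" by (cases x)
      have "(I, J) \<in> BR n" using x IJ by simp
      from BR_sub[OF this] obtain \<sigma> where "\<exists>S. permn n \<sigma> \<and> S \<subseteq> {1..<n} \<and> (\<forall>k. conn S k (\<sigma> k)) \<and> I = perm_part n \<sigma> \<and> J = bpart n S" ..
      then obtain S where h: "permn n \<sigma> \<and> S \<subseteq> {1..<n} \<and> (\<forall>k. conn S k (\<sigma> k)) \<and> I = perm_part n \<sigma> \<and> J = bpart n S" ..
      note s1 = h[THEN conjunct1] and s2 = h[THEN conjunct2, THEN conjunct1]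
        and s3 = h[THEN conjunct2, THEN conjunct2, THEN conjunct1]
        and s4 = h[THEN conjunct2, THEN conjunct2, THEN conjunct2, THEN conjunct1]
        and s5 = h[THEN conjunct2, THEN conjunct2, THEN conjunct2, THEN conjunct2]
      from word_exists[OF s1 s2 s3] obtain w where "set w \<subseteq> gens n \<and> perm_of w = \<sigma> \<and> idx_of w = S" ..
      note w1 = this[THEN conjunct1] and w2 = this[THEN conjunct2, THEN conjunct1]
        and w3 = this[THEN conjunct2, THEN conjunct2]
      have "eval_word n w = (perm_part n \<sigma>, bpart n S)" using eval_Phi[OF w1] unfolding w2 w3 .
      then have "eval_word n w = x" unfolding IJ s4 s5 .
      then show "x \<in> eval_word n ` {w. set w \<subseteq> gens n}" using w1 by blast
    qed
  qed
next
  fix u v assume u: "set u \<subseteq> gens n" and v: "set v \<subseteq> gens n"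
  show "eval_word n u = eval_word n v \<longleftrightarrow> wcong (rels n) u v"
  proof
    assume "wcong (rels n) u v"
    then have "perm_of u = perm_of v \<and> idx_of u = idx_of v" by (rule wcong_inv)
    then show "eval_word n u = eval_word n v" using eval_Phi[OF u] eval_Phi[OF v] by simp
  next
    assume ev: "eval_word n u = eval_word n v"
    have e1: "perm_part n (perm_of u) = perm_part n (perm_of v)" and e2: "bpart n (idx_of u) = bpart n (idx_of v)"
      using ev unfolding eval_Phi[OF u] eval_Phi[OF v] by simp_all
    have pe: "perm_of u = perm_of v" by (rule perm_part_inj[OF permn_perm[OF u] permn_perm[OF v] e1])
    have iu: "idx_of u \<subseteq> {1..<n}" using u valid_iff by blast
    have iv: "idx_of v \<subseteq> {1..<n}" using v valid_iff by blast
    have ie: "idx_of u = idx_of v" by (rule bpart_inj[OF iu iv e2])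
    from normalize[OF u] obtain l1 where "\<exists>N. N \<in> normal (n-1) \<and> set l1 = idx_of u \<and> idx_of N \<subseteq> set l1 \<and> cg n u (map E l1 @ N)" ..
    then obtain N1 where h1: "N1 \<in> normal (n-1) \<and> set l1 = idx_of u \<and> idx_of N1 \<subseteq> set l1 \<and> cg n u (map E l1 @ N1)" ..
    from normalize[OF v] obtain l2 where "\<exists>N. N \<in> normal (n-1) \<and> set l2 = idx_of v \<and> idx_of N \<subseteq> set l2 \<and> cg n v (map E l2 @ N)" ..
    then obtain N2 where h2: "N2 \<in> normal (n-1) \<and> set l2 = idx_of v \<and> idx_of N2 \<subseteq> set l2 \<and> cg n v (map E l2 @ N2)" ..
    note n11 = h1[THEN conjunct1] and n12 = h1[THEN conjunct2, THEN conjunct1]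
      and n14 = h1[THEN conjunct2, THEN conjunct2, THEN conjunct2]
    note n21 = h2[THEN conjunct1] and n22 = h2[THEN conjunct2, THEN conjunct1]
      and n24 = h2[THEN conjunct2, THEN conjunct2, THEN conjunct2]
    have "perm_of u = perm_of N1" using conjunct1[OF wcong_inv[OF n14]] by simp
    moreover have "perm_of v = perm_of N2" using conjunct1[OF wcong_inv[OF n24]] by simp
    ultimately have "perm_of N1 = perm_of N2" using pe by simp
    then have NN: "N1 = N2" by (rule normal_inj[OF n11 n21])
    have l1: "set l1 = set l2" unfolding n12 n22 ie ..
    have l2: "set l2 \<subseteq> {1..<n}" unfolding n22 by (rule iv)
    have "cg n (map E l1 @ N1) (map E l2 @ N1)" by (rule wcong_post[OF Es_eq[OF l1 l2]])
    then have "cg n (map E l1 @ N1) (map E l2 @ N2)" unfolding NN .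
    then show "wcong (rels n) u v"
      using wcong.trans[OF n14 wcong.trans[OF _ wcong.sym[OF n24]]] by blast
  qed
qed


end
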